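(* Let $\mu$ be a finite nonnegative measure and $P,Q$ probability measures on $\mathcal{X}$ (with $\mu\ll Q$, $P\ll Q$), $X\sim P$, $\epsilon\in(0,1)$, $\gamma\ge1$. (a) For every $a>1$: $E_\gamma(P\|Q)\le\bar F_\gamma(P\|Q)\le\frac{a}{a-1}E_{\gamma/a}(P\|Q)$. (b) $D(P\|Q)\le\int_0^\infty\mathbb{P}[\imath_{P\|Q}(X)>\tau]\,d\tau$ and $D(P\|Q)\ge E_\gamma(P\|Q)\log\gamma-2e^{-1}\log e$. (c) If $\alpha\in[0,1)$ then $D_\alpha(\mu\|Q)\le\log\gamma-\frac{1}{1-\alpha}\log\big(\mu(\mathcal{X})-E_\gamma(\mu\|Q)\big)$; if $\alpha\in(1,\infty)$ then $D_\alpha(\mu\|Q)\ge\log\gamma+\frac1{\alpha-1}\log E_\gamma(\mu\|Q)$. (d) If $\alpha\in[0,1)$ and $E_\gamma(P\|Q)<1-\epsilon$ then $D_\alpha^{+\epsilon}(P\|Q)\le\log\gamma-\frac1{1-\alpha}\log(1-\epsilon-E_\gamma(P\|Q))$; if $\alpha\in(1,\infty]$ and $E_\gamma(P\|Q)>\epsilon$ then $D_\alpha^{-\epsilon}(P\|Q)\ge\log\gamma+\frac1{\alpha-1}\log(E_\gamma(P\|Q)-\epsilon)$. (e) $D_\infty^{-\epsilon}(P\|Q)\le\log\gamma$ if and only if $E_\gamma(P\|Q)\le\epsilon$; equivalently $D_\infty^{-\epsilon}(P\|Q)=\log\inf\{\gamma: E_\gamma(P\|Q)\le\epsilon\}$.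 (f) $D_0^{+\epsilon}(P\|Q)=-\log\beta_{1-\epsilon}(P,Q)$. (g) Let $\tau\in\mathbb{R}$ with $\epsilon\ge\mathbb{P}[\imath_{P\|Q}(X)\le\tau]$. Then $D_0^{+\epsilon}(P\|Q)\ge\tau$, and if moreover $P$ is non-atomic, $D_0^{+\epsilon}(P\|Q)\ge\tau+\log\frac1{1-\epsilon}$.
   Context: For nonnegative finite measures $\mu\ll\nu$ and $\gamma\ge1$ (and also for $\gamma>0$ by the same formula): $E_\gamma(\mu\|\nu):=\sup_{\mathcal{A}}\{\mu(\mathcal{A})-\gamma\nu(\mathcal{A})\}$. $\imath_{P\|Q}=\log\frac{dP}{dQ}$, $\bar F_\gamma(P\|Q)=\mathbb{P}[\imath_{P\|Q}(X)>\log\gamma]$ with $X\sim P$, and $D(P\|Q)=\mathbb{E}[\imath_{P\|Q}(X)]$. Rényi divergence of a nonnegative finite measure $\mu\ll Q$ w.r.t. probability $Q$: for $\alpha\in(0,1)\cup(1,\infty)$, $D_\alpha(\mu\|Q)=\frac1{\alpha-1}\log\mathbb{E}[(\frac{d\mu}{dQ}(Y))^\alpha]$, $Y\sim Q$; $D_0(\mu\|Q)=\log\frac1{Q(\imath_{\mu\|Q}>-\infty)}$; $D_\infty(\mu\|Q)=\mu$-$\operatorname{ess\,sup}\imath_{\mu\|Q}$. With $B^\epsilon(P):=\{\mu\text{ nonnegative}: E_1(P\|\mu)\le\epsilon\}$: for $\alpha\in[0,1)$, $D_\alpha^{+\epsilon}(P\|Q):=\sup_{\mu\in B^\epsilon(P)}D_\alpha(\mu\|Q)$;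 for $\alpha\in(1,\infty]$, $D_\alpha^{-\epsilon}(P\|Q):=\inf_{\mu\in B^\epsilon(P)}D_\alpha(\mu\|Q)$. For nonnegative finite measures, $\beta_\alpha(\mu,\nu):=\min_{\mathcal{A}:\mu(\mathcal{A})\ge\alpha}\nu(\mathcal{A})$ (deterministic tests only). *)

theory Defs
  imports "HOL-Probability.Probability"
begin

text \<open>Logarithms are to an arbitrary base b > 1 (the paper leaves the base unspecified,
  hence the term log e).  elog extends log to [0,\<infinity>] with log 0 = -\<infinity>, log \<infinity> = \<infinity>.\<close>
definition elog :: "real \<Rightarrow> ennreal \<Rightarrow> ereal" where
  "elog b x = (if x = 0 then - \<infinity> else if x = \<top> then \<infinity> else ereal (log b (enn2real x)))"

definition Egamma :: "real \<Rightarrow> 'a measure \<Rightarrow> 'a measure \<Rightarrow> real" where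
  "Egamma \<gamma> \<mu> \<nu> = Sup ((\<lambda>A. measure \<mu> A - \<gamma> * measure \<nu> A) ` sets \<mu>)"

definition info_dens :: "real \<Rightarrow> 'a measure \<Rightarrow> 'a measure \<Rightarrow> 'a \<Rightarrow> ereal" where
  "info_dens b P Q x = elog b (RN_deriv Q P x)"

definition Fbar :: "real \<Rightarrow> real \<Rightarrow> 'a measure \<Rightarrow> 'a measure \<Rightarrow> real" where
  "Fbar b \<gamma> P Q = measure P {x \<in> space P. info_dens b P Q x > ereal (log b \<gamma>)}"

definition relent :: "real \<Rightarrow> 'a measure \<Rightarrow> 'a measure \<Rightarrow> ereal" where
  "relent b P Q =
     enn2ereal (\<integral>\<^sup>+ x. e2ennreal (max 0 (info_dens b P Q x)) \<partial>P)
   - enn2ereal (\<integral>\<^sup>+ x. e2ennreal (max 0 (- info_dens b P Q x)) \<partial>P)"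

text \<open>Renyi divergence D_alpha(mu||Q) of a finite measure mu << Q w.r.t. a probability Q,
  for alpha in [0,1) \<union> (1,\<infinity>]; the value at alpha = 1 is irrelevant.\<close>
definition renyi :: "real \<Rightarrow> ereal \<Rightarrow> 'a measure \<Rightarrow> 'a measure \<Rightarrow> ereal" where
  "renyi b \<alpha> \<mu> Q =
    (if \<alpha> = \<infinity> then esssup \<mu> (\<lambda>x. elog b (RN_deriv Q \<mu> x))
     else if \<alpha> = 0 then elog b (1 / emeasure Q {y \<in> space Q. elog b (RN_deriv Q \<mu> y) > - \<infinity>})
     else ereal (1 / (real_of_ereal \<alpha> - 1)) *
       elog b (\<integral>\<^sup>+ y. ennreal (enn2real (RN_deriv Q \<mu> y) powr real_of_ereal \<alpha>) \<partial>Q))"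

text \<open>The ball B^eps(P): finite nonnegative measures mu on the same measurable space,
  with mu << Q (so that D_alpha(mu||Q) is defined), and E_1(P||mu) \<le> eps.\<close>
definition Bball :: "real \<Rightarrow> 'a measure \<Rightarrow> 'a measure \<Rightarrow> 'a measure set" where
  "Bball \<epsilon> P Q = {\<mu>. sets \<mu> = sets P \<and> finite_measure \<mu> \<and> absolutely_continuous Q \<mu>
                      \<and> Egamma 1 P \<mu> \<le> \<epsilon>}"

definition renyi_plus :: "real \<Rightarrow> ereal \<Rightarrow> real \<Rightarrow> 'a measure \<Rightarrow> 'a measure \<Rightarrow> ereal" where
  "renyi_plus b \<alpha> \<epsilon> P Q = (SUP \<mu>\<in>Bball \<epsilon> P Q. renyi b \<alpha> \<mu> Q)"

definition renyi_minus :: "real \<Rightarrow> ereal \<Rightarrow> real \<Rightarrow> 'a measure \<Rightarrow> 'a measure \<Rightarrow> ereal" where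
  "renyi_minus b \<alpha> \<epsilon> P Q = (INF \<mu>\<in>Bball \<epsilon> P Q. renyi b \<alpha> \<mu> Q)"

text \<open>beta_alpha(mu,nu) = min over events A with mu(A) \<ge> alpha of nu(A) (deterministic tests),
  written as an infimum.\<close>
definition beta_NP :: "real \<Rightarrow> 'a measure \<Rightarrow> 'a measure \<Rightarrow> real" where
  "beta_NP \<alpha> \<mu> \<nu> = Inf {measure \<nu> A | A. A \<in> sets \<mu> \<and> measure \<mu> A \<ge> \<alpha>}"

definition nonatomic :: "'a measure \<Rightarrow> bool" where
  "nonatomic M \<longleftrightarrow> (\<forall>A\<in>sets M. emeasure M A > 0 \<longrightarrow>
       (\<exists>B\<in>sets M. B \<subseteq> A \<and> 0 < emeasure M B \<and> emeasure M B < emeasure M A))"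

end

theory Submission
  imports Defs
begin

lemma lborel_Ici_top: "emeasure lborel {0::real..} = top"
proof -
  have "of_nat n \<le> emeasure lborel {0::real..}" for n
  proof -
    have "emeasure lborel {0::real..<real n} \<le> emeasure lborel {0::real..}"
      by (intro emeasure_mono) auto
    then show ?thesis by (simp add: ennreal_of_nat_eq_real_of_nat)
  qed
  then have "(SUP n. of_nat n :: ennreal) \<le> emeasure lborel {0::real..}" by (intro SUP_least) simp
  then show ?thesis by (simp add: ennreal_SUP_of_nat_eq_top top_unique)
qed

lemma layer_one:
  fixes c :: ennreal
  shows "(\<integral>\<^sup>+ \<tau>. (if 0 \<le> \<tau> \<and> ennreal \<tau> < c then 1 else 0) \<partial>lborel) = c"
proof (cases c rule: ennreal_cases)
  case (real r)
  have "(\<integral>\<^sup>+ \<tau>. (if 0 \<le> \<tau> \<and> ennreal \<tau> < c then 1 else 0) \<partial>lborel) = (\<integral>\<^sup>+ \<tau>. indicator {0..<r} \<tau> \<partial>lborel)"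
    using real by (intro nn_integral_cong) (auto simp: indicator_def ennreal_less_iff)
  also have "\<dots> = c" using real by simp
  finally show ?thesis .
next
  case top
  have "(\<integral>\<^sup>+ \<tau>. (if 0 \<le> \<tau> \<and> ennreal \<tau> < c then 1 else 0) \<partial>lborel) = (\<integral>\<^sup>+ \<tau>. indicator {0::real..} \<tau> \<partial>lborel)"
    using top by (intro nn_integral_cong) (auto simp: indicator_def)
  also have "\<dots> = c" using top by (simp add: lborel_Ici_top)
  finally show ?thesis .
qed

lemma layer_cake:
  assumes f[measurable]: "f \<in> borel_measurable M" and sf: "sigma_finite_measure M"
  shows "(\<integral>\<^sup>+ x. f x \<partial>M) = (\<integral>\<^sup>+ \<tau>. emeasure M {x \<in> space M. ennreal \<tau> < f x} * indicator {0..} \<tau> \<partial>lborel)"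
proof -
  interpret M: sigma_finite_measure M by (rule sf)
  interpret pair_sigma_finite M lborel ..
  have "(\<integral>\<^sup>+ x. f x \<partial>M) = (\<integral>\<^sup>+ x. (\<integral>\<^sup>+ \<tau>. (if 0 \<le> \<tau> \<and> ennreal \<tau> < f x then 1 else 0) \<partial>lborel) \<partial>M)"
    by (simp add: layer_one)
  also have "\<dots> = (\<integral>\<^sup>+ \<tau>. (\<integral>\<^sup>+ x. (if 0 \<le> \<tau> \<and> ennreal \<tau> < f x then 1 else 0) \<partial>M) \<partial>lborel)"
    by (rule Fubini'[symmetric]) measurable
  also have "\<dots> = (\<integral>\<^sup>+ \<tau>. emeasure M {x \<in> space M. ennreal \<tau> < f x} * indicator {0..} \<tau> \<partial>lborel)"
  proof (rule nn_integral_cong)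
    fix \<tau> :: real
    have "(\<integral>\<^sup>+ x. (if 0 \<le> \<tau> \<and> ennreal \<tau> < f x then 1 else 0) \<partial>M)
        = (\<integral>\<^sup>+ x. indicator {0..} \<tau> * indicator {x \<in> space M. ennreal \<tau> < f x} x \<partial>M)"
      by (intro nn_integral_cong) (auto simp: indicator_def)
    also have "\<dots> = indicator {0..} \<tau> * emeasure M {x \<in> space M. ennreal \<tau> < f x}"
      by (subst nn_integral_cmult) auto
    finally show "(\<integral>\<^sup>+ x. (if 0 \<le> \<tau> \<and> ennreal \<tau> < f x then 1 else 0) \<partial>M)
        = emeasure M {x \<in> space M. ennreal \<tau> < f x} * indicator {0..} \<tau>"
      by (simp add: mult.commute)
  qed
  finally show ?thesis .
qed

lemma lc_aux:
  assumes "(\<tau>::real) \<ge> 0"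
  shows "ennreal \<tau> < e2ennreal (max 0 y) \<longleftrightarrow> ereal \<tau> < y"
proof (cases y)
  case (real r)
  show ?thesis
  proof (cases "r \<ge> 0")
    case True
    then have "max 0 y = ereal r" using real by (simp add: max_def)
    then show ?thesis using real assms True by (simp add: ennreal_less_iff)
  next
    case False
    then have "max 0 y = 0" using real by (simp add: max_def)
    then show ?thesis using real assms False by simp
  qed
qed (use assms in auto)

lemma ereal_minus_nonneg_le:
  fixes x y :: ereal assumes "0 \<le> y" "y \<noteq> \<infinity>" shows "x - y \<le> x"
  using assms by (cases x; cases y) auto



context finite_measure
begin

lemma na_half:
  assumes na: "nonatomic M" and F: "F \<in> sets M" "measure M F > 0"
  shows "\<exists>G\<in>sets M. G \<subseteq> F \<and> 0 < measure M G \<and> measure M G \<le> measure M F / 2"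
proof -
  have "emeasure M F > 0" using F by (simp add: emeasure_eq_measure)
  then obtain G where G: "G \<in> sets M" "G \<subseteq> F" "0 < emeasure M G" "emeasure M G < emeasure M F"
    using na F unfolding nonatomic_def by blast
  have g: "0 < measure M G" "measure M G < measure M F"
    using G(3,4) by (simp_all add: emeasure_eq_measure ennreal_less_iff)
  show ?thesis
  proof (cases "measure M G \<le> measure M F / 2")
    case True then show ?thesis using G g by blast
  next
    case False
    have "measure M (F - G) = measure M F - measure M G"
      using finite_measure_Diff[OF F(1) G(1) G(2)] .
    then show ?thesis using False g G F by (intro bexI[of _ "F - G"]) auto
  qed
qed

lemma na_small:
  assumes na: "nonatomic M" and A: "A \<in> sets M" "measure M A > 0" and e: "e > 0"
  shows "\<exists>F\<in>sets M. F \<subseteq> A \<and> 0 < measure M F \<and> measure M F \<le> e"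
proof -
  have *: "\<exists>F\<in>sets M. F \<subseteq> A \<and> 0 < measure M F \<and> measure M F \<le> measure M A / 2 ^ n" for n
  proof (induction n)
    case 0 then show ?case using A by auto
  next
    case (Suc n)
    then obtain F where F: "F \<in> sets M" "F \<subseteq> A" "0 < measure M F" "measure M F \<le> measure M A / 2 ^ n"
      by blast
    obtain G where G: "G \<in> sets M" "G \<subseteq> F" "0 < measure M G" "measure M G \<le> measure M F / 2"
      using na_half[OF na F(1,3)] by blast
    have eq: "measure M A / 2 ^ Suc n = (measure M A / 2 ^ n) / 2" by simp
    have "measure M G \<le> measure M A / 2 ^ Suc n" unfolding eq using G(4) divide_right_mono[OF F(4), of 2] by linarith
    then show ?case using G F by blast
  qed
  have pos: "0 < e / measure M A" using e A by simp
  have "\<exists>n. (1/2::real) ^ n < e / measure M A" by (rule real_arch_pow_inv[OF pos]) simp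
  then obtain n where n: "(1/2::real) ^ n < e / measure M A" by blast
  then have "(1/2::real) ^ n * measure M A < e" using A(2) by (simp add: pos_less_divide_eq)
  moreover have "measure M A / 2 ^ n = (1/2::real) ^ n * measure M A" by (simp add: power_one_over)
  ultimately have lt: "measure M A / 2 ^ n < e" by simp
  obtain F where F: "F \<in> sets M" "F \<subseteq> A" "0 < measure M F" "measure M F \<le> measure M A / 2 ^ n"
    using *[of n] by blast
  then have "measure M F \<le> e" using lt by simp
  then show ?thesis using F by blast
qed

lemma sierpinski:
  assumes na: "nonatomic M" and A: "A \<in> sets M" and r: "0 \<le> r" "r \<le> measure M A"
  shows "\<exists>E\<in>sets M. E \<subseteq> A \<and> measure M E = r"
proof -
  define cand where "cand E = {F. F \<in> sets M \<and> F \<subseteq> A - E \<and> measure M E + measure M F \<le> r}" for E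
  define s where "s E = Sup (measure M ` cand E)" for E
  define ch where "ch E = (SOME F. F \<in> cand E \<and> measure M F \<ge> s E / 2)" for E
  define step where "step E = E \<union> ch E" for E
  define seq where "seq n = (step ^^ n) {}" for n
  define Inv where "Inv E \<longleftrightarrow> E \<in> sets M \<and> E \<subseteq> A \<and> measure M E \<le> r" for E
  have bdd: "bdd_above (measure M ` cand E)" for E
    by (intro bdd_aboveI2) (rule bounded_measure)
  have ex: "\<exists>F. F \<in> cand E \<and> measure M F \<ge> s E / 2" if "Inv E" for E
  proof (cases "s E \<le> 0")
    case True
    have "{} \<in> cand E" using that unfolding cand_def Inv_def by simp
    then show ?thesis using True by (intro exI[of _ "{}"]) simp
  next
    case False
    have "{} \<in> cand E" using that unfolding cand_def Inv_def by simp
    then have ne: "measure M ` cand E \<noteq> {}" by blast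
    have "s E / 2 < s E" using False by simp
    then have "\<exists>x\<in>measure M ` cand E. s E / 2 < x"
      unfolding s_def using less_cSup_iff[OF ne bdd] by simp
    then obtain F where "F \<in> cand E" "s E / 2 < measure M F" by blast
    then show ?thesis by (intro exI[of _ F]) simp
  qed
  have ch: "ch E \<in> cand E \<and> measure M (ch E) \<ge> s E / 2" if "Inv E" for E
    unfolding ch_def using someI_ex[OF ex[OF that]] .
  have step_meas: "measure M (step E) = measure M E + measure M (ch E)" if "Inv E" for E
  proof -
    have c: "ch E \<in> sets M" "ch E \<subseteq> A - E" using ch[OF that] unfolding cand_def by simp_all
    have e: "E \<in> sets M" using that unfolding Inv_def by simp
    have d: "E \<inter> ch E = {}" using c(2) by blast
    show ?thesis unfolding step_def by (rule finite_measure_Union[OF e c(1) d])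
  qed
  have Inv_step: "Inv (step E)" if "Inv E" for E
  proof -
    have c: "ch E \<in> sets M" "ch E \<subseteq> A - E" "measure M E + measure M (ch E) \<le> r"
      using ch[OF that] unfolding cand_def by simp_all
    have e: "E \<in> sets M" "E \<subseteq> A" "measure M E \<le> r" using that unfolding Inv_def by simp_all
    have "step E \<in> sets M" unfolding step_def using e(1) c(1) by (rule sets.Un)
    moreover have "step E \<subseteq> A" unfolding step_def using e(2) c(2) by blast
    moreover have "measure M (step E) \<le> r" using step_meas[OF that] c(3) by simp
    ultimately show ?thesis unfolding Inv_def by simp
  qed
  have seq_Suc: "seq (Suc n) = step (seq n)" for n unfolding seq_def by simp
  have Inv_seq: "Inv (seq n)" for n
  proof (induction n)
    case 0 then show ?case using r by (simp add: seq_def Inv_def)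
  next
    case (Suc n) then show ?case unfolding seq_Suc by (rule Inv_step)
  qed
  have inc: "incseq seq"
    by (rule incseq_SucI) (simp add: seq_Suc step_def)
  define E where "E = (\<Union>n. seq n)"
  have Esets: "E \<in> sets M" unfolding E_def using Inv_seq unfolding Inv_def by auto
  have EA: "E \<subseteq> A" unfolding E_def using Inv_seq unfolding Inv_def by auto
  have lim: "(\<lambda>n. measure M (seq n)) \<longlonglongrightarrow> measure M E"
    unfolding E_def by (rule finite_Lim_measure_incseq) (use Inv_seq inc in \<open>auto simp: Inv_def\<close>)
  have Er: "measure M E \<le> r"
    by (rule LIMSEQ_le_const2[OF lim]) (use Inv_seq in \<open>auto simp: Inv_def\<close>)
  have seqE: "measure M (seq n) \<le> measure M E" for n
    using Esets unfolding E_def by (intro finite_measure_mono) auto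
  show ?thesis
  proof (cases "measure M E = r")
    case True then show ?thesis using Esets EA by blast
  next
    case False
    then have Elt: "measure M E < r" using Er by simp
    have AE: "measure M (A - E) = measure M A - measure M E"
      by (rule finite_measure_Diff[OF A Esets EA])
    then have "measure M (A - E) > 0" using Elt r by simp
    then obtain F where F: "F \<in> sets M" "F \<subseteq> A - E" "0 < measure M F" "measure M F \<le> r - measure M E"
      using na_small[OF na _ _, of "A - E" "r - measure M E"] A Esets Elt by auto
    have sF: "measure M F \<le> s (seq n)" for n
    proof -
      have "F \<in> cand (seq n)"
        unfolding cand_def using F seqE[of n] unfolding E_def by auto
      then show ?thesis unfolding s_def by (intro cSup_upper bdd) simp
    qed
    have grow: "measure M (seq n) \<ge> real n * (measure M F / 2)" for n
    proof (induction n)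
      case 0 then show ?case by simp
    next
      case (Suc n)
      have "measure M (seq (Suc n)) = measure M (seq n) + measure M (ch (seq n))"
        unfolding seq_Suc by (rule step_meas[OF Inv_seq])
      moreover have "measure M (ch (seq n)) \<ge> measure M F / 2"
        using ch[OF Inv_seq[of n]] sF[of n] by simp
      ultimately show ?case using Suc by (simp add: algebra_simps)
    qed
    obtain n :: nat where n: "real n > 2 * r / measure M F" using reals_Archimedean2 by blast
    then have "real n * (measure M F / 2) > r" using F(3) by (simp add: field_simps)
    moreover have "measure M (seq n) \<le> r" using Inv_seq[of n] unfolding Inv_def by simp
    ultimately show ?thesis using grow[of n] by simp
  qed
qed

end



lemma Egamma_ge:
  assumes "finite_measure \<mu>" "A \<in> sets \<mu>" "\<gamma> \<ge> 0"
  shows "measure \<mu> A - \<gamma> * measure \<nu> A \<le> Egamma \<gamma> \<mu> \<nu>"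
  unfolding Egamma_def
proof (rule cSUP_upper[OF assms(2)])
  interpret finite_measure \<mu> by fact
  show "bdd_above ((\<lambda>A. measure \<mu> A - \<gamma> * measure \<nu> A) ` sets \<mu>)"
  proof (rule bdd_aboveI2)
    fix B show "measure \<mu> B - \<gamma> * measure \<nu> B \<le> measure \<mu> (space \<mu>)"
      using bounded_measure[of B] assms(3) measure_nonneg[of \<nu> B] by (smt (verit) mult_nonneg_nonneg)
  qed
qed

lemma Egamma_le:
  assumes "\<And>A. A \<in> sets \<mu> \<Longrightarrow> measure \<mu> A - \<gamma> * measure \<nu> A \<le> c"
  shows "Egamma \<gamma> \<mu> \<nu> \<le> c"
  unfolding Egamma_def
  by (rule cSUP_least) (use assms sets.empty_sets in auto)

lemma elog_mono:
  assumes b: "b > 1" and le: "x \<le> y" shows "elog b x \<le> elog b y"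
proof (cases "x = 0 \<or> y = \<top>")
  case True then show ?thesis by (auto simp: elog_def)
next
  case False
  then have 3: "x \<noteq> 0" "y \<noteq> \<top>" by auto
  have "x \<noteq> \<top>" using le 3 by (metis top.extremum_uniqueI)
  have "y \<noteq> 0" using le 3 by (metis le_zero_eq)
  have "enn2real x \<le> enn2real y" using le 3 by (simp add: enn2real_mono top.not_eq_extremum)
  moreover have "0 < enn2real x" using 3 \<open>x \<noteq> \<top>\<close> by (simp add: enn2real_positive_iff top.not_eq_extremum zero_less_iff_neq_zero)
  ultimately have "log b (enn2real x) \<le> log b (enn2real y)" using b by simp
  then show ?thesis using 3 \<open>x \<noteq> \<top>\<close> \<open>y \<noteq> 0\<close> unfolding elog_def by simp
qed

lemma elog_ennreal: "r > 0 \<Longrightarrow> elog b (ennreal r) = ereal (log b r)"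
  by (simp add: elog_def)

lemma elog_ennreal_nonpos: "r \<le> 0 \<Longrightarrow> elog b (ennreal r) = - \<infinity>"
  by (simp add: elog_def ennreal_eq_0_iff)

lemma elog_eq_minf: "elog b x = - \<infinity> \<longleftrightarrow> x = 0"
  by (simp add: elog_def)

lemma ereal_neg_mult_aux:
  assumes "c < 0" "ereal y \<le> x" shows "ereal c * x \<le> ereal (c * y)"
  using assms by (cases x) (auto intro: mult_left_mono_neg)

lemma ereal_pos_mult_aux:
  assumes "c > 0" "ereal y \<le> x" shows "ereal (c * y) \<le> ereal c * x"
  using assms by (cases x) (auto intro: mult_left_mono)

lemma pw1:
  fixes \<gamma> r \<alpha> :: real
  assumes "0 < \<gamma>" "0 \<le> r" "r \<le> \<gamma>" "\<alpha> \<le> 1"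
  shows "\<gamma> powr (\<alpha> - 1) * r \<le> r powr \<alpha>"
proof (cases "r = 0")
  case False
  then have r: "r > 0" using assms by simp
  have "\<gamma> powr (\<alpha> - 1) \<le> r powr (\<alpha> - 1)"
    by (rule powr_mono2') (use assms r in auto)
  then have "\<gamma> powr (\<alpha> - 1) * r \<le> r powr (\<alpha> - 1) * r" using r by simp
  also have "\<dots> = r powr \<alpha>" using r powr_add[of r "\<alpha> - 1" 1] by simp
  finally show ?thesis .
qed simp

lemma pw3:
  fixes \<gamma> r \<alpha> :: real
  assumes "0 < \<gamma>" "\<gamma> \<le> r" "\<alpha> \<ge> 1"
  shows "\<gamma> powr (\<alpha> - 1) * r \<le> r powr \<alpha>"
proof -
  have r: "r > 0" using assms by simp
  have "\<gamma> powr (\<alpha> - 1) \<le> r powr (\<alpha> - 1)"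
    by (rule powr_mono2) (use assms r in auto)
  then have "\<gamma> powr (\<alpha> - 1) * r \<le> r powr (\<alpha> - 1) * r" using r by simp
  also have "\<dots> = r powr \<alpha>" using r powr_add[of r "\<alpha> - 1" 1] by simp
  finally show ?thesis .
qed

locale dsetting =
  fixes Q \<mu> :: "'a measure"
  assumes Q: "prob_space Q" and fmu: "finite_measure \<mu>" and smu: "sets \<mu> = sets Q"
    and ac: "absolutely_continuous Q \<mu>"
begin

interpretation Q: prob_space Q by (rule Q)
interpretation mu: finite_measure \<mu> by (rule fmu)

definition "m = RN_deriv Q \<mu>"

lemma m_meas[measurable]: "m \<in> borel_measurable Q"
  unfolding m_def by simp

lemma dens: "density Q m = \<mu>"
  unfolding m_def by (rule Q.density_RN_deriv[OF ac smu])

lemma space_mu: "space \<mu> = space Q"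
  using smu by (rule sets_eq_imp_space_eq)

lemma emeas: "A \<in> sets Q \<Longrightarrow> emeasure \<mu> A = (\<integral>\<^sup>+ x. m x * indicator A x \<partial>Q)"
  by (subst dens[symmetric]) (simp add: emeasure_density)

lemma m_fin: "AE x in Q. m x \<noteq> \<infinity>"
  unfolding m_def by (rule Q.RN_deriv_finite[OF _ ac smu]) (simp add: mu.sigma_finite_measure_axioms)

lemma meas_le:
  assumes A: "A \<in> sets Q" and c: "c \<ge> 0" and le: "\<And>x. x \<in> A \<Longrightarrow> m x \<le> ennreal c"
  shows "measure \<mu> A \<le> c * measure Q A"
proof -
  have "emeasure \<mu> A \<le> (\<integral>\<^sup>+ x. ennreal c * indicator A x \<partial>Q)"
    unfolding emeas[OF A] by (intro nn_integral_mono) (auto simp: le indicator_def)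
  also have "\<dots> = ennreal (c * measure Q A)"
    using A c by (simp add: nn_integral_cmult_indicator Q.emeasure_eq_measure ennreal_mult)
  finally show ?thesis using c by (simp add: mu.emeasure_eq_measure ennreal_le_iff)
qed

lemma meas_ge:
  assumes A: "A \<in> sets Q" and c: "c \<ge> 0" and le: "\<And>x. x \<in> A \<Longrightarrow> ennreal c \<le> m x"
  shows "c * measure Q A \<le> measure \<mu> A"
proof -
  have "ennreal (c * measure Q A) = (\<integral>\<^sup>+ x. ennreal c * indicator A x \<partial>Q)"
    using A c by (simp add: nn_integral_cmult_indicator Q.emeasure_eq_measure ennreal_mult)
  also have "\<dots> \<le> emeasure \<mu> A"
    unfolding emeas[OF A] by (intro nn_integral_mono) (auto simp: le indicator_def)
  finally show ?thesis using c by (simp add: mu.emeasure_eq_measure ennreal_le_iff)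
qed

definition "S \<gamma> = {x \<in> space Q. ennreal \<gamma> < m x}"

lemma S_sets[measurable]: "S \<gamma> \<in> sets Q"
  unfolding S_def by measurable

lemma Egamma_eq:
  assumes g: "\<gamma> \<ge> 0"
  shows "Egamma \<gamma> \<mu> Q = measure \<mu> (S \<gamma>) - \<gamma> * measure Q (S \<gamma>)"
proof (rule antisym)
  show "measure \<mu> (S \<gamma>) - \<gamma> * measure Q (S \<gamma>) \<le> Egamma \<gamma> \<mu> Q"
    by (rule Egamma_ge[OF fmu _ g]) (simp add: smu)
  show "Egamma \<gamma> \<mu> Q \<le> measure \<mu> (S \<gamma>) - \<gamma> * measure Q (S \<gamma>)"
  proof (rule Egamma_le)
    fix A assume "A \<in> sets \<mu>"
    then have A: "A \<in> sets Q" using smu by simp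
    have 1: "measure \<mu> (A - S \<gamma>) \<le> \<gamma> * measure Q (A - S \<gamma>)"
      by (rule meas_le) (use A g in \<open>auto simp: S_def not_less dest: sets.sets_into_space\<close>)
    have 2: "\<gamma> * measure Q (S \<gamma> - A) \<le> measure \<mu> (S \<gamma> - A)"
      by (rule meas_ge) (use A g in \<open>auto simp: S_def\<close>)
    have a1: "measure \<mu> A = measure \<mu> (A \<inter> S \<gamma>) + measure \<mu> (A - S \<gamma>)"
      using mu.finite_measure_Diff'[of A "S \<gamma>"] A smu by simp
    have a2: "measure \<mu> (S \<gamma>) = measure \<mu> (A \<inter> S \<gamma>) + measure \<mu> (S \<gamma> - A)"
      using mu.finite_measure_Diff'[of "S \<gamma>" A] A smu by (simp add: Int_commute)
    have a3: "measure Q A = measure Q (A \<inter> S \<gamma>) + measure Q (A - S \<gamma>)"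
      using Q.finite_measure_Diff'[of A "S \<gamma>"] A by simp
    have a4: "measure Q (S \<gamma>) = measure Q (A \<inter> S \<gamma>) + measure Q (S \<gamma> - A)"
      using Q.finite_measure_Diff'[of "S \<gamma>" A] A by (simp add: Int_commute)
    show "measure \<mu> A - \<gamma> * measure Q A \<le> measure \<mu> (S \<gamma>) - \<gamma> * measure Q (S \<gamma>)"
      using 1 2 a1 a2 a3 a4 by (simp add: algebra_simps)
  qed
qed


lemma Dq:
  assumes g: "\<gamma> \<ge> 0"
  shows "measure \<mu> (space \<mu>) - Egamma \<gamma> \<mu> Q = measure \<mu> (space Q - S \<gamma>) + \<gamma> * measure Q (S \<gamma>)"
  using Egamma_eq[OF g] mu.finite_measure_compl[of "S \<gamma>"] smu space_mu by simp

lemma renyi_lt1: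
  assumes b: "b > 1" and g: "\<gamma> > 0" and a: "0 < \<alpha>" "\<alpha> < 1"
  shows "renyi b (ereal \<alpha>) \<mu> Q \<le> ereal (log b \<gamma>)
            - ereal (1 / (1 - \<alpha>)) * elog b (ennreal (measure \<mu> (space \<mu>) - Egamma \<gamma> \<mu> Q))"
proof -
  define D where "D = measure \<mu> (space \<mu>) - Egamma \<gamma> \<mu> Q"
  have D: "D = measure \<mu> (space Q - S \<gamma>) + \<gamma> * measure Q (S \<gamma>)"
    unfolding D_def using Dq g by simp
  define I where "I = (\<integral>\<^sup>+ y. ennreal (enn2real (m y) powr \<alpha>) \<partial>Q)"
  have ren: "renyi b (ereal \<alpha>) \<mu> Q = ereal (1 / (\<alpha> - 1)) * elog b I"
    using a unfolding renyi_def I_def m_def by simp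
  have "ennreal (\<gamma> powr (\<alpha> - 1) * D) = ennreal (\<gamma> powr (\<alpha> - 1)) *
      (emeasure \<mu> (space Q - S \<gamma>) + ennreal \<gamma> * emeasure Q (S \<gamma>))"
  proof -
    have "emeasure \<mu> (space Q - S \<gamma>) + ennreal \<gamma> * emeasure Q (S \<gamma>)
        = ennreal (measure \<mu> (space Q - S \<gamma>)) + ennreal (\<gamma> * measure Q (S \<gamma>))"
      using g by (simp add: mu.emeasure_eq_measure Q.emeasure_eq_measure ennreal_mult)
    also have "\<dots> = ennreal D" unfolding D using g by (simp add: ennreal_plus)
    finally show ?thesis using g by (simp add: ennreal_mult')
  qed
  also have "\<dots> = ennreal (\<gamma> powr (\<alpha> - 1)) *
      ((\<integral>\<^sup>+ y. m y * indicator (space Q - S \<gamma>) y \<partial>Q) + (\<integral>\<^sup>+ y. ennreal \<gamma> * indicator (S \<gamma>) y \<partial>Q))"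
    by (simp add: emeas nn_integral_cmult_indicator)
  also have "\<dots> = (\<integral>\<^sup>+ y. ennreal (\<gamma> powr (\<alpha> - 1)) * (m y * indicator (space Q - S \<gamma>) y + ennreal \<gamma> * indicator (S \<gamma>) y) \<partial>Q)"
    by (simp add: nn_integral_add nn_integral_cmult)
  also have "\<dots> \<le> I"
    unfolding I_def
  proof (rule nn_integral_mono_AE)
    show "AE y in Q. ennreal (\<gamma> powr (\<alpha> - 1)) * (m y * indicator (space Q - S \<gamma>) y + ennreal \<gamma> * indicator (S \<gamma>) y)
        \<le> ennreal (enn2real (m y) powr \<alpha>)"
      using m_fin
    proof eventually_elim
      case (elim y)
      show ?case
      proof (cases "y \<in> S \<gamma>")
        case True
        then have "ennreal \<gamma> < ennreal (enn2real (m y))" using elim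
          by (simp add: S_def ennreal_enn2real_if)
        then have "\<gamma> < enn2real (m y)" using ennreal_less_iff[of \<gamma> "enn2real (m y)"] g by simp
        then have "\<gamma> powr \<alpha> \<le> enn2real (m y) powr \<alpha>"
          using g a by (intro powr_mono2) auto
        have eqg: "\<gamma> powr (\<alpha> - 1) * \<gamma> = \<gamma> powr \<alpha>" using g powr_add[of \<gamma> "\<alpha> - 1" 1] by simp
        have "ennreal (\<gamma> powr (\<alpha> - 1)) * ennreal \<gamma> = ennreal (\<gamma> powr \<alpha>)"
          using eqg by (metis ennreal_mult' powr_ge_zero)
        then have "ennreal (\<gamma> powr (\<alpha> - 1)) * (m y * indicator (space Q - S \<gamma>) y + ennreal \<gamma> * indicator (S \<gamma>) y) = ennreal (\<gamma> powr \<alpha>)"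
          using True by (simp add: indicator_def)
        then show ?thesis using \<open>\<gamma> powr \<alpha> \<le> enn2real (m y) powr \<alpha>\<close> by (simp add: ennreal_leI)
      next
        case False
        show ?thesis
        proof (cases "y \<in> space Q")
          case True
          then have le: "m y \<le> ennreal \<gamma>" using False by (auto simp: S_def not_less)
          then have "enn2real (m y) \<le> \<gamma>" using g by (simp add: enn2real_leI)
          then have h1: "\<gamma> powr (\<alpha> - 1) * enn2real (m y) \<le> enn2real (m y) powr \<alpha>"
            using g a by (intro pw1) auto
          have h2: "m y = ennreal (enn2real (m y))" using elim by (simp add: ennreal_enn2real_if)
          have h3: "ennreal (\<gamma> powr (\<alpha> - 1)) * ennreal (enn2real (m y)) = ennreal (\<gamma> powr (\<alpha> - 1) * enn2real (m y))"
            by (simp add: ennreal_mult)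
          have "ennreal (\<gamma> powr (\<alpha> - 1)) * (m y * indicator (space Q - S \<gamma>) y + ennreal \<gamma> * indicator (S \<gamma>) y)
              = ennreal (\<gamma> powr (\<alpha> - 1)) * m y" using True False by (simp add: indicator_def)
          also have "\<dots> = ennreal (\<gamma> powr (\<alpha> - 1) * enn2real (m y))" using h2 h3 by metis
          also have "\<dots> \<le> ennreal (enn2real (m y) powr \<alpha>)" using h1 by (rule ennreal_leI)
          finally show ?thesis .
        next
          case False
          then have "y \<notin> S \<gamma>" by (auto simp: S_def)
          then show ?thesis using False by (simp add: indicator_def)
        qed
      qed
    qed
  qed
  finally have IK: "ennreal (\<gamma> powr (\<alpha> - 1) * D) \<le> I" .
  show ?thesis
  proof (cases "D > 0")
    case False
    then have "elog b (ennreal (measure \<mu> (space \<mu>) - Egamma \<gamma> \<mu> Q)) = - \<infinity>"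
      unfolding D_def by (simp add: elog_ennreal_nonpos)
    then show ?thesis using a by simp
  next
    case True
    have K: "\<gamma> powr (\<alpha> - 1) * D > 0" using True g by simp
    have "ereal (log b (\<gamma> powr (\<alpha> - 1) * D)) \<le> elog b I"
      using elog_mono[OF b IK] elog_ennreal[OF K] by simp
    then have "renyi b (ereal \<alpha>) \<mu> Q \<le> ereal (1 / (\<alpha> - 1) * log b (\<gamma> powr (\<alpha> - 1) * D))"
      unfolding ren using a by (intro ereal_neg_mult_aux) auto
    also have "1 / (\<alpha> - 1) * log b (\<gamma> powr (\<alpha> - 1) * D) = log b \<gamma> - 1 / (1 - \<alpha>) * log b D"
      using g True a b by (simp add: log_mult log_powr field_simps)
    finally show ?thesis using True unfolding D_def by (simp add: elog_ennreal)
  qed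
qed


lemma renyi_0:
  assumes b: "b > 1" and g: "\<gamma> > 0" and a: "\<alpha> = 0"
  shows "renyi b (ereal \<alpha>) \<mu> Q \<le> ereal (log b \<gamma>)
            - ereal (1 / (1 - \<alpha>)) * elog b (ennreal (measure \<mu> (space \<mu>) - Egamma \<gamma> \<mu> Q))"
proof -
  define D where "D = measure \<mu> (space \<mu>) - Egamma \<gamma> \<mu> Q"
  have D: "D = measure \<mu> (space Q - S \<gamma>) + \<gamma> * measure Q (S \<gamma>)"
    unfolding D_def using Dq g by simp
  define T where "T = {y \<in> space Q. m y \<noteq> 0}"
  have T[measurable]: "T \<in> sets Q" unfolding T_def by measurable
  have ren: "renyi b (ereal \<alpha>) \<mu> Q = elog b (1 / emeasure Q T)"
    using a unfolding renyi_def T_def m_def by (simp add: elog_eq_minf)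
  have ST: "S \<gamma> \<subseteq> T" using g by (auto simp: S_def T_def)
  have z: "measure \<mu> ((space Q - S \<gamma>) - T) \<le> 0 * measure Q ((space Q - S \<gamma>) - T)"
    by (rule meas_le) (auto simp: T_def)
  have w: "measure \<mu> ((space Q - S \<gamma>) \<inter> T) \<le> \<gamma> * measure Q ((space Q - S \<gamma>) \<inter> T)"
    by (rule meas_le) (use g in \<open>auto simp: T_def S_def not_less\<close>)
  have s1: "measure \<mu> (space Q - S \<gamma>) = measure \<mu> ((space Q - S \<gamma>) \<inter> T) + measure \<mu> ((space Q - S \<gamma>) - T)"
    using mu.finite_measure_Diff'[of "space Q - S \<gamma>" T] smu by simp
  have s2: "measure Q T = measure Q ((space Q - S \<gamma>) \<inter> T) + measure Q (S \<gamma>)"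
  proof -
    have "T = ((space Q - S \<gamma>) \<inter> T) \<union> S \<gamma>" using ST T sets.sets_into_space[OF T] by auto
    then have "measure Q T = measure Q (((space Q - S \<gamma>) \<inter> T) \<union> S \<gamma>)" by simp
    also have "\<dots> = measure Q ((space Q - S \<gamma>) \<inter> T) + measure Q (S \<gamma>)"
      by (rule Q.finite_measure_Union) auto
    finally show ?thesis .
  qed
  have DT: "D \<le> \<gamma> * measure Q T"
    unfolding D using z w s1 s2 by (simp add: algebra_simps)
  show ?thesis
  proof (cases "D > 0")
    case False
    then have "elog b (ennreal (measure \<mu> (space \<mu>) - Egamma \<gamma> \<mu> Q)) = - \<infinity>"
      unfolding D_def by (simp add: elog_ennreal_nonpos)
    then show ?thesis using a by simp
  next
    case True
    then have qT: "measure Q T > 0" using DT g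
      using measure_nonneg[of Q T] by (cases "measure Q T = 0") (auto simp: less_le)
    have "1 / emeasure Q T = ennreal (1 / measure Q T)"
      using qT divide_ennreal[of 1 "measure Q T"] by (simp add: Q.emeasure_eq_measure)
    then have "renyi b (ereal \<alpha>) \<mu> Q = ereal (log b (1 / measure Q T))"
      unfolding ren using qT by (simp add: elog_ennreal)
    also have "log b (1 / measure Q T) \<le> log b \<gamma> - log b D"
    proof -
      have "log b D \<le> log b (\<gamma> * measure Q T)" using DT True b by simp
      then show ?thesis using qT g b by (simp add: log_mult log_divide)
    qed
    finally show ?thesis using True a unfolding D_def by (simp add: elog_ennreal)
  qed
qed

lemma renyi_gt1:
  assumes b: "b > 1" and g: "\<gamma> > 0" and a: "1 < \<alpha>"
  shows "renyi b (ereal \<alpha>) \<mu> Q \<ge> ereal (log b \<gamma>)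
            + ereal (1 / (\<alpha> - 1)) * elog b (ennreal (Egamma \<gamma> \<mu> Q))"
proof -
  define E where "E = Egamma \<gamma> \<mu> Q"
  have E: "E = measure \<mu> (S \<gamma>) - \<gamma> * measure Q (S \<gamma>)"
    unfolding E_def using Egamma_eq g by simp
  have EmS: "E \<le> measure \<mu> (S \<gamma>)" unfolding E using g by simp
  define I where "I = (\<integral>\<^sup>+ y. ennreal (enn2real (m y) powr \<alpha>) \<partial>Q)"
  have ren: "renyi b (ereal \<alpha>) \<mu> Q = ereal (1 / (\<alpha> - 1)) * elog b I"
    using a unfolding renyi_def I_def m_def by simp
  have "ennreal (\<gamma> powr (\<alpha> - 1) * measure \<mu> (S \<gamma>)) = ennreal (\<gamma> powr (\<alpha> - 1)) * emeasure \<mu> (S \<gamma>)"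
    by (simp add: mu.emeasure_eq_measure ennreal_mult)
  also have "\<dots> = (\<integral>\<^sup>+ y. ennreal (\<gamma> powr (\<alpha> - 1)) * (m y * indicator (S \<gamma>) y) \<partial>Q)"
    by (simp add: emeas nn_integral_cmult)
  also have "\<dots> \<le> I"
    unfolding I_def
  proof (rule nn_integral_mono_AE)
    show "AE y in Q. ennreal (\<gamma> powr (\<alpha> - 1)) * (m y * indicator (S \<gamma>) y)
        \<le> ennreal (enn2real (m y) powr \<alpha>)"
      using m_fin
    proof eventually_elim
      case (elim y)
      show ?case
      proof (cases "y \<in> S \<gamma>")
        case True
        then have "ennreal \<gamma> < ennreal (enn2real (m y))" using elim
          by (simp add: S_def ennreal_enn2real_if)
        then have "\<gamma> < enn2real (m y)" using ennreal_less_iff[of \<gamma> "enn2real (m y)"] g by simp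
        then have h1: "\<gamma> powr (\<alpha> - 1) * enn2real (m y) \<le> enn2real (m y) powr \<alpha>"
          using g a by (intro pw3) auto
        have h2: "m y = ennreal (enn2real (m y))" using elim by (simp add: ennreal_enn2real_if)
        have h3: "ennreal (\<gamma> powr (\<alpha> - 1)) * ennreal (enn2real (m y)) = ennreal (\<gamma> powr (\<alpha> - 1) * enn2real (m y))"
          by (simp add: ennreal_mult)
        have "ennreal (\<gamma> powr (\<alpha> - 1)) * (m y * indicator (S \<gamma>) y)
              = ennreal (\<gamma> powr (\<alpha> - 1)) * m y" using True by (simp add: indicator_def)
        also have "\<dots> = ennreal (\<gamma> powr (\<alpha> - 1) * enn2real (m y))" using h2 h3 by metis
        also have "\<dots> \<le> ennreal (enn2real (m y) powr \<alpha>)" using h1 by (rule ennreal_leI)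
        finally show ?thesis .
      qed (simp add: indicator_def)
    qed
  qed
  finally have IK: "ennreal (\<gamma> powr (\<alpha> - 1) * measure \<mu> (S \<gamma>)) \<le> I" .
  show ?thesis
  proof (cases "E > 0")
    case False
    then have "elog b (ennreal (Egamma \<gamma> \<mu> Q)) = - \<infinity>"
      unfolding E_def by (simp add: elog_ennreal_nonpos)
    then show ?thesis using a by simp
  next
    case True
    have K: "\<gamma> powr (\<alpha> - 1) * E > 0" using True g by simp
    have "ennreal (\<gamma> powr (\<alpha> - 1) * E) \<le> ennreal (\<gamma> powr (\<alpha> - 1) * measure \<mu> (S \<gamma>))"
      using EmS by (intro ennreal_leI mult_left_mono) auto
    then have "ennreal (\<gamma> powr (\<alpha> - 1) * E) \<le> I" using IK by (rule order.trans)
    then have "ereal (log b (\<gamma> powr (\<alpha> - 1) * E)) \<le> elog b I"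
      using elog_mono[OF b] elog_ennreal[OF K, of b] by metis
    then have "ereal (1 / (\<alpha> - 1) * log b (\<gamma> powr (\<alpha> - 1) * E)) \<le> renyi b (ereal \<alpha>) \<mu> Q"
      unfolding ren using a by (intro ereal_pos_mult_aux) auto
    moreover have "1 / (\<alpha> - 1) * log b (\<gamma> powr (\<alpha> - 1) * E) = log b \<gamma> + 1 / (\<alpha> - 1) * log b E"
      using g True a b by (simp add: log_mult log_powr field_simps)
    ultimately show ?thesis using True unfolding E_def by (simp add: elog_ennreal)
  qed
qed

end


lemma elog_gt_iff:
  assumes b: "b > 1" and g: "g > 0"
  shows "ereal (log b g) < elog b x \<longleftrightarrow> ennreal g < x"
proof (cases x rule: ennreal_cases)
  case (real r)
  show ?thesis
  proof (cases "r > 0")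
    case True
    then show ?thesis using real b g by (simp add: elog_def ennreal_less_iff)
  next
    case False
    then have "ennreal r = 0" by (simp add: ennreal_eq_0_iff)
    then show ?thesis using real g by (simp add: elog_def)
  qed
qed (auto simp: elog_def)

lemma elog_le_iff:
  assumes b: "b > 1" and g: "g > 0"
  shows "elog b x \<le> ereal (log b g) \<longleftrightarrow> x \<le> ennreal g"
  using elog_gt_iff[OF b g, of x] by (simp add: not_less[symmetric])

lemma elog_measurable[measurable]:
  assumes [measurable]: "f \<in> borel_measurable M"
  shows "(\<lambda>x. elog b (f x)) \<in> borel_measurable M"
  unfolding elog_def by measurable

lemma xlogx_bound:
  assumes b: "b > 1" and r: "0 < r" "r < 1"
  shows "r * (- log b r) \<le> exp (-1) * log b (exp 1)"
proof -
  have "ln (exp (-1) / r) \<le> exp (-1) / r - 1" using r by (intro ln_le_minus_one) auto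
  then have "-1 - ln r \<le> exp (-1) / r - 1" using r by (simp add: ln_div)
  then have "- ln r \<le> exp (-1) / r" by simp
  then have "r * (- ln r) \<le> exp (-1)" using r by (simp add: field_simps)
  moreover have "ln b > 0" using b by simp
  ultimately have "r * (- ln r) / ln b \<le> exp (-1) / ln b" by (intro divide_right_mono) auto
  moreover have "r * (- log b r) = r * (- ln r) / ln b" by (simp add: log_def)
  moreover have "log b (exp 1) = 1 / ln b" by (simp add: log_def)
  ultimately show ?thesis by simp
qed

lemma ennreal_one_div_antimono:
  fixes x y :: ennreal assumes "x \<le> y" shows "1 / y \<le> 1 / x"
proof (cases "x = 0")
  case True then show ?thesis by simp
next
  case False
  show ?thesis
  proof (cases "y = top")
    case True then show ?thesis by simp
  next
    case False
    obtain r where r: "x = ennreal r" "r \<ge> 0" using \<open>x \<le> y\<close> False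
      by (cases x rule: ennreal_cases) (auto simp: top_unique)
    obtain s where s: "y = ennreal s" "s \<ge> 0" using False by (cases y rule: ennreal_cases) auto
    have r0: "r > 0" using \<open>x \<noteq> 0\<close> r by (auto simp: less_le)
    have rs: "r \<le> s" using \<open>x \<le> y\<close> r s by simp
    then have s0: "s > 0" using r0 by simp
    have "1 / s \<le> 1 / r" using r0 rs by (simp add: frac_le)
    then show ?thesis using r s r0 s0 divide_ennreal[of 1 r] divide_ennreal[of 1 s]
      by (simp add: ennreal_leI)
  qed
qed

lemma elog_inv_real:
  assumes "q > 0" shows "elog b (1 / ennreal q) = ereal (log b (1 / q))"
  using assms divide_ennreal[of 1 q] by (simp add: elog_ennreal)

locale msetting =
  fixes b \<epsilon> :: real and P Q :: "'a measure"
  assumes b: "b > 1" and P: "prob_space P" and Q: "prob_space Q"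
    and sPQ: "sets P = sets Q" and acP: "absolutely_continuous Q P"
    and eps: "0 < \<epsilon>" "\<epsilon> < 1"
begin

interpretation Q: prob_space Q by (rule Q)
interpretation P: prob_space P by (rule P)

sublocale PD: dsetting Q P
  by unfold_locales (auto simp: Q sPQ acP P.finite_measure_axioms)

abbreviation "p \<equiv> PD.m"

lemma spaceP: "space P = space Q" by (rule PD.space_mu)

lemma Fbar_eq:
  assumes g: "\<gamma> > 0"
  shows "Fbar b \<gamma> P Q = measure P (PD.S \<gamma>)"
proof -
  have "{x \<in> space P. info_dens b P Q x > ereal (log b \<gamma>)} = PD.S \<gamma>"
    unfolding info_dens_def PD.S_def PD.m_def spaceP using elog_gt_iff[OF b g] by auto
  then show ?thesis unfolding Fbar_def by simp
qed

lemma part_a: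
  assumes g: "\<gamma> \<ge> 1" and a: "a > 1"
  shows "Egamma \<gamma> P Q \<le> Fbar b \<gamma> P Q \<and> Fbar b \<gamma> P Q \<le> a / (a - 1) * Egamma (\<gamma> / a) P Q"
proof
  show "Egamma \<gamma> P Q \<le> Fbar b \<gamma> P Q"
    using PD.Egamma_eq[of \<gamma>] Fbar_eq[of \<gamma>] g by simp
  have 1: "measure P (PD.S \<gamma>) - \<gamma> / a * measure Q (PD.S \<gamma>) \<le> Egamma (\<gamma> / a) P Q"
    by (rule Egamma_ge) (use g a in \<open>auto simp: sPQ P.finite_measure_axioms\<close>)
  have 2: "\<gamma> * measure Q (PD.S \<gamma>) \<le> measure P (PD.S \<gamma>)"
    by (rule PD.meas_ge) (use g in \<open>auto simp: PD.S_def\<close>)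
  have "measure P (PD.S \<gamma>) * (a - 1) / a \<le> Egamma (\<gamma> / a) P Q"
  proof -
    have "\<gamma> / a * measure Q (PD.S \<gamma>) \<le> measure P (PD.S \<gamma>) / a"
      using 2 a by (simp add: divide_right_mono)
    then show ?thesis using 1 a by (simp add: field_simps)
  qed
  then show "Fbar b \<gamma> P Q \<le> a / (a - 1) * Egamma (\<gamma> / a) P Q"
    using Fbar_eq[of \<gamma>] g a by (simp add: field_simps)
qed


definition "Ipos = (\<integral>\<^sup>+ x. e2ennreal (max 0 (info_dens b P Q x)) \<partial>P)"
definition "Ineg = (\<integral>\<^sup>+ x. e2ennreal (max 0 (- info_dens b P Q x)) \<partial>P)"

lemma relent_eq: "relent b P Q = enn2ereal Ipos - enn2ereal Ineg"
  unfolding relent_def Ipos_def Ineg_def ..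

lemma info_meas[measurable]: "info_dens b P Q \<in> borel_measurable Q"
  unfolding info_dens_def by measurable

lemma Ineg_le: "Ineg \<le> ennreal (exp (-1) * log b (exp 1))"
proof -
  define c0 where "c0 = exp (-1) * log b (exp 1)"
  have c0: "c0 \<ge> 0" unfolding c0_def using b by simp
  have "Ineg = (\<integral>\<^sup>+ x. e2ennreal (max 0 (- elog b (p x))) \<partial>density Q p)"
    using PD.dens unfolding Ineg_def info_dens_def PD.m_def by simp
  also have "\<dots> = (\<integral>\<^sup>+ x. p x * e2ennreal (max 0 (- elog b (p x))) \<partial>Q)"
    by (rule nn_integral_density) measurable
  also have "\<dots> \<le> (\<integral>\<^sup>+ x. ennreal c0 \<partial>Q)"
  proof (rule nn_integral_mono)
    fix x
    show "p x * e2ennreal (max 0 (- elog b (p x))) \<le> ennreal c0"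
    proof (cases "p x" rule: ennreal_cases)
      case (real r)
      show ?thesis
      proof (cases "r > 0")
        case False
        then have "p x = 0" using real by (simp add: ennreal_eq_0_iff)
        then show ?thesis by simp
      next
        case True
        then have el: "elog b (p x) = ereal (log b r)" using real by (simp add: elog_ennreal)
        show ?thesis
        proof (cases "r < 1")
          case False
          then have "log b r \<ge> 0" using b by simp
          then have "max 0 (- elog b (p x)) = 0" unfolding el by simp
          then show ?thesis by simp
        next
          case True
          then have "log b r < 0" using b \<open>r > 0\<close> by simp
          then have "max 0 (- elog b (p x)) = ereal (- log b r)" unfolding el by simp
          then have "p x * e2ennreal (max 0 (- elog b (p x))) = ennreal (r * (- log b r))"
            using real \<open>r > 0\<close> \<open>log b r < 0\<close> ennreal_mult'[of r "- log b r"] by simp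
          also have "\<dots> \<le> ennreal c0" unfolding c0_def
            using xlogx_bound[OF b \<open>r > 0\<close> True] by (rule ennreal_leI)
          finally show ?thesis .
        qed
      qed
    next
      case top
      then show ?thesis by (simp add: elog_def)
    qed
  qed
  also have "\<dots> = ennreal c0" by (simp add: Q.emeasure_space_1)
  finally show ?thesis unfolding c0_def .
qed

lemma Ipos_ge:
  assumes g: "\<gamma> \<ge> 1"
  shows "ennreal (log b \<gamma> * measure P (PD.S \<gamma>)) \<le> Ipos"
proof -
  have "ennreal (log b \<gamma> * measure P (PD.S \<gamma>)) = (\<integral>\<^sup>+ x. ennreal (log b \<gamma>) * indicator (PD.S \<gamma>) x \<partial>P)"
    using g b by (simp add: nn_integral_cmult_indicator sPQ P.emeasure_eq_measure ennreal_mult)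
  also have "\<dots> \<le> Ipos" unfolding Ipos_def
  proof (rule nn_integral_mono)
    fix x
    show "ennreal (log b \<gamma>) * indicator (PD.S \<gamma>) x \<le> e2ennreal (max 0 (info_dens b P Q x))"
    proof (cases "x \<in> PD.S \<gamma>")
      case True
      then have "ereal (log b \<gamma>) < info_dens b P Q x"
        unfolding info_dens_def PD.S_def PD.m_def using elog_gt_iff[OF b, of \<gamma>] g by auto
      then have "ereal (log b \<gamma>) \<le> max 0 (info_dens b P Q x)" by (meson less_imp_le max.coboundedI2)
      then have "e2ennreal (ereal (log b \<gamma>)) \<le> e2ennreal (max 0 (info_dens b P Q x))"
        by (rule e2ennreal_mono)
      then show ?thesis using True by simp
    qed simp
  qed
  finally show ?thesis .
qed

lemma part_b2:
  assumes g: "\<gamma> \<ge> 1"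
  shows "relent b P Q \<ge> ereal (Egamma \<gamma> P Q * log b \<gamma> - 2 * exp (-1) * log b (exp 1))"
proof -
  define c0 where "c0 = exp (-1) * log b (exp 1)"
  have c0: "c0 \<ge> 0" unfolding c0_def using b by simp
  have lg: "log b \<gamma> \<ge> 0" using g b by simp
  have E: "Egamma \<gamma> P Q \<le> measure P (PD.S \<gamma>)" using PD.Egamma_eq[of \<gamma>] g by simp
  have "enn2ereal (ennreal (log b \<gamma> * measure P (PD.S \<gamma>))) \<le> enn2ereal Ipos"
    using Ipos_ge[OF g] by (simp add: less_eq_ennreal.rep_eq)
  then have 1: "ereal (log b \<gamma> * measure P (PD.S \<gamma>)) \<le> enn2ereal Ipos" using lg by simp
  have "enn2ereal Ineg \<le> enn2ereal (ennreal c0)"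
    using Ineg_le unfolding c0_def by (simp add: less_eq_ennreal.rep_eq)
  then have 2: "enn2ereal Ineg \<le> ereal c0" using c0 by simp
  have "ereal (log b \<gamma> * measure P (PD.S \<gamma>)) - ereal c0 \<le> enn2ereal Ipos - enn2ereal Ineg"
    using 1 2 by (rule ereal_minus_mono)
  moreover have "Egamma \<gamma> P Q * log b \<gamma> - 2 * exp (-1) * log b (exp 1) \<le> log b \<gamma> * measure P (PD.S \<gamma>) - c0"
    using mult_right_mono[OF E lg] c0 unfolding c0_def by (simp add: mult.commute)
  ultimately show ?thesis unfolding relent_eq by (smt (verit) ereal_less_eq(3) ereal_minus(1) order_trans)
qed


lemma Bball_D:
  assumes "\<mu> \<in> Bball \<epsilon> P Q"
  shows "dsetting Q \<mu>" and "\<And>A. A \<in> sets Q \<Longrightarrow> measure P A - measure \<mu> A \<le> \<epsilon>"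
proof -
  have "sets \<mu> = sets P" "finite_measure \<mu>" "absolutely_continuous Q \<mu>"
    using assms unfolding Bball_def by auto
  then show "dsetting Q \<mu>" by (intro dsetting.intro Q) (simp_all add: sPQ)
  fix A assume "A \<in> sets Q"
  have "measure P A - 1 * measure \<mu> A \<le> Egamma 1 P \<mu>"
    by (rule Egamma_ge) (use \<open>A \<in> sets Q\<close> in \<open>auto simp: sPQ P.finite_measure_axioms\<close>)
  then show "measure P A - measure \<mu> A \<le> \<epsilon>" using assms unfolding Bball_def by simp
qed

lemma Bball_E1:
  assumes mu: "\<mu> \<in> Bball \<epsilon> P Q" and g: "\<gamma> \<ge> 0"
  shows "Egamma \<gamma> \<mu> Q \<ge> Egamma \<gamma> P Q - \<epsilon>"
proof -
  interpret M: dsetting Q \<mu> by (rule Bball_D(1)[OF mu])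
  have "measure \<mu> (PD.S \<gamma>) - \<gamma> * measure Q (PD.S \<gamma>) \<le> Egamma \<gamma> \<mu> Q"
    by (rule Egamma_ge) (use g in \<open>auto simp: M.smu M.fmu\<close>)
  moreover have "measure P (PD.S \<gamma>) - measure \<mu> (PD.S \<gamma>) \<le> \<epsilon>"
    by (rule Bball_D(2)[OF mu]) simp
  ultimately show ?thesis using PD.Egamma_eq[OF g] by simp
qed

lemma Bball_E2:
  assumes mu: "\<mu> \<in> Bball \<epsilon> P Q" and g: "\<gamma> \<ge> 0"
  shows "measure \<mu> (space \<mu>) - Egamma \<gamma> \<mu> Q \<ge> 1 - \<epsilon> - Egamma \<gamma> P Q"
proof -
  interpret M: dsetting Q \<mu> by (rule Bball_D(1)[OF mu])
  have 1: "measure P (M.S \<gamma>) - \<gamma> * measure Q (M.S \<gamma>) \<le> Egamma \<gamma> P Q"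
    by (rule Egamma_ge) (use g in \<open>auto simp: sPQ P.finite_measure_axioms\<close>)
  have 2: "measure P (space Q - M.S \<gamma>) - measure \<mu> (space Q - M.S \<gamma>) \<le> \<epsilon>"
    by (rule Bball_D(2)[OF mu]) auto
  have 3: "measure P (space Q - M.S \<gamma>) = 1 - measure P (M.S \<gamma>)"
    using P.prob_compl[of "M.S \<gamma>"] spaceP sPQ by simp
  show ?thesis using M.Dq[OF g] 1 2 3 by simp
qed

lemma part_d1:
  assumes g: "\<gamma> \<ge> 1" and a: "0 \<le> \<alpha>" "\<alpha> < 1" and E: "Egamma \<gamma> P Q < 1 - \<epsilon>"
  shows "renyi_plus b (ereal \<alpha>) \<epsilon> P Q \<le> ereal (log b \<gamma> - 1 / (1 - \<alpha>) * log b (1 - \<epsilon> - Egamma \<gamma> P Q))"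
  unfolding renyi_plus_def
proof (rule SUP_least)
  fix \<mu> assume mu: "\<mu> \<in> Bball \<epsilon> P Q"
  interpret M: dsetting Q \<mu> by (rule Bball_D(1)[OF mu])
  define K where "K = 1 - \<epsilon> - Egamma \<gamma> P Q"
  have K: "K > 0" unfolding K_def using E by simp
  have KD: "K \<le> measure \<mu> (space \<mu>) - Egamma \<gamma> \<mu> Q" unfolding K_def using Bball_E2[OF mu] g by simp
  have r: "renyi b (ereal \<alpha>) \<mu> Q \<le> ereal (log b \<gamma>)
            - ereal (1 / (1 - \<alpha>)) * elog b (ennreal (measure \<mu> (space \<mu>) - Egamma \<gamma> \<mu> Q))"
  proof (cases "\<alpha> = 0")
    case True then show ?thesis using M.renyi_0[OF b, of \<gamma> \<alpha>] g by simp
  next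
    case False then show ?thesis using M.renyi_lt1[OF b, of \<gamma> \<alpha>] g a by simp
  qed
  have "ereal (log b K) \<le> elog b (ennreal (measure \<mu> (space \<mu>) - Egamma \<gamma> \<mu> Q))"
    using elog_mono[OF b ennreal_leI[OF KD]] elog_ennreal[OF K, of b] by simp
  then have "ereal (1 / (1 - \<alpha>) * log b K) \<le> ereal (1 / (1 - \<alpha>)) * elog b (ennreal (measure \<mu> (space \<mu>) - Egamma \<gamma> \<mu> Q))"
    using a by (intro ereal_pos_mult_aux) auto
  then have "ereal (log b \<gamma>) - ereal (1 / (1 - \<alpha>)) * elog b (ennreal (measure \<mu> (space \<mu>) - Egamma \<gamma> \<mu> Q))
      \<le> ereal (log b \<gamma>) - ereal (1 / (1 - \<alpha>) * log b K)"
    by (intro ereal_minus_mono) auto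
  then show "renyi b (ereal \<alpha>) \<mu> Q \<le> ereal (log b \<gamma> - 1 / (1 - \<alpha>) * log b (1 - \<epsilon> - Egamma \<gamma> P Q))"
    using r unfolding K_def by simp
qed

lemma part_d2:
  assumes g: "\<gamma> \<ge> 1" and a: "1 < \<alpha>" and E: "Egamma \<gamma> P Q > \<epsilon>"
  shows "renyi_minus b (ereal \<alpha>) \<epsilon> P Q \<ge> ereal (log b \<gamma> + 1 / (\<alpha> - 1) * log b (Egamma \<gamma> P Q - \<epsilon>))"
  unfolding renyi_minus_def
proof (rule INF_greatest)
  fix \<mu> assume mu: "\<mu> \<in> Bball \<epsilon> P Q"
  interpret M: dsetting Q \<mu> by (rule Bball_D(1)[OF mu])
  define K where "K = Egamma \<gamma> P Q - \<epsilon>"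
  have K: "K > 0" unfolding K_def using E by simp
  have KD: "K \<le> Egamma \<gamma> \<mu> Q" unfolding K_def using Bball_E1[OF mu] g by simp
  have r: "renyi b (ereal \<alpha>) \<mu> Q \<ge> ereal (log b \<gamma>)
            + ereal (1 / (\<alpha> - 1)) * elog b (ennreal (Egamma \<gamma> \<mu> Q))"
    using M.renyi_gt1[OF b, of \<gamma> \<alpha>] g a by simp
  have "ereal (log b K) \<le> elog b (ennreal (Egamma \<gamma> \<mu> Q))"
    using elog_mono[OF b ennreal_leI[OF KD]] elog_ennreal[OF K, of b] by simp
  then have "ereal (1 / (\<alpha> - 1) * log b K) \<le> ereal (1 / (\<alpha> - 1)) * elog b (ennreal (Egamma \<gamma> \<mu> Q))"
    using a by (intro ereal_pos_mult_aux) auto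
  then have "ereal (log b \<gamma>) + ereal (1 / (\<alpha> - 1) * log b K) \<le> ereal (log b \<gamma>)
            + ereal (1 / (\<alpha> - 1)) * elog b (ennreal (Egamma \<gamma> \<mu> Q))"
    by (intro add_left_mono)
  then show "ereal (log b \<gamma> + 1 / (\<alpha> - 1) * log b (Egamma \<gamma> P Q - \<epsilon>)) \<le> renyi b (ereal \<alpha>) \<mu> Q"
    using r unfolding K_def by simp
qed


lemma Linf:
  assumes g: "g > 0" and E: "Egamma g P Q > \<epsilon>" and mu: "\<mu> \<in> Bball \<epsilon> P Q"
  shows "ereal (log b g) \<le> renyi b \<infinity> \<mu> Q"
proof (rule ccontr)
  interpret M: dsetting Q \<mu> by (rule Bball_D(1)[OF mu])
  assume "\<not> ereal (log b g) \<le> renyi b \<infinity> \<mu> Q"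
  then have lt: "esssup \<mu> (\<lambda>x. elog b (M.m x)) < ereal (log b g)"
    unfolding renyi_def M.m_def by simp
  have "AE x in \<mu>. x \<notin> M.S g"
    using esssup_AE[of "\<lambda>x. elog b (M.m x)" \<mu>]
  proof eventually_elim
    case (elim x)
    show ?case
    proof
      assume "x \<in> M.S g"
      then have "ereal (log b g) < elog b (M.m x)"
        using elog_gt_iff[OF b g] by (auto simp: M.S_def)
      then show False using elim lt by simp
    qed
  qed
  then have "emeasure \<mu> {x \<in> space \<mu>. x \<in> M.S g} = 0"
    by (intro emeasure_eq_0_AE) simp
  moreover have "{x \<in> space \<mu>. x \<in> M.S g} = M.S g"
    using M.space_mu by (auto simp: M.S_def)
  ultimately have "measure \<mu> (M.S g) = 0" by (simp add: measure_def)
  moreover have "Egamma g \<mu> Q > 0" using Bball_E1[OF mu, of g] g E by simp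
  moreover have "g * measure Q (M.S g) \<ge> 0" using g by simp
  ultimately show False using M.Egamma_eq[of g] g by simp
qed

lemma Uinf:
  assumes g: "g > 0" and E: "Egamma g P Q \<le> \<epsilon>"
  shows "\<exists>\<mu> \<in> Bball \<epsilon> P Q. renyi b \<infinity> \<mu> Q \<le> ereal (log b g)"
proof
  define f where "f x = min (p x) (ennreal g)" for x
  have f[measurable]: "f \<in> borel_measurable Q" unfolding f_def by measurable
  define \<mu> where "\<mu> = density Q f"
  have smu: "sets \<mu> = sets Q" and spmu: "space \<mu> = space Q" unfolding \<mu>_def by auto
  have emu: "emeasure \<mu> A = (\<integral>\<^sup>+ x. f x * indicator A x \<partial>Q)" if "A \<in> sets Q" for A
    unfolding \<mu>_def using that by (simp add: emeasure_density)
  have fin: "finite_measure \<mu>"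
  proof
    have "emeasure \<mu> (space \<mu>) \<le> (\<integral>\<^sup>+ x. p x * indicator (space Q) x \<partial>Q)"
      unfolding spmu emu[OF sets.top] by (intro nn_integral_mono) (auto simp: f_def indicator_def)
    also have "\<dots> = emeasure P (space Q)" by (simp add: PD.emeas)
    also have "\<dots> = 1" using spaceP P.emeasure_space_1 by simp
    finally show "emeasure \<mu> (space \<mu>) \<noteq> \<infinity>" by (auto simp: top_unique)
  qed
  interpret mu: finite_measure \<mu> by (rule fin)
  have ac: "absolutely_continuous Q \<mu>" unfolding \<mu>_def by (rule absolutely_continuousI_density) simp
  have Eb: "Egamma 1 P \<mu> \<le> \<epsilon>"
  proof (rule Egamma_le)
    fix A assume "A \<in> sets P"
    then have A[measurable]: "A \<in> sets Q" by (simp add: sPQ)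
    define S where "S = PD.S g"
    have S[measurable]: "S \<in> sets Q" unfolding S_def by simp
    have e1: "emeasure \<mu> (A \<inter> S) = ennreal (g * measure Q (A \<inter> S))"
    proof -
      have "emeasure \<mu> (A \<inter> S) = (\<integral>\<^sup>+ x. ennreal g * indicator (A \<inter> S) x \<partial>Q)"
        unfolding emu[OF sets.Int[OF A S]]
        by (intro nn_integral_cong) (auto simp: f_def indicator_def S_def PD.S_def min_def)
      also have "\<dots> = ennreal (g * measure Q (A \<inter> S))"
        using g by (simp add: nn_integral_cmult_indicator Q.emeasure_eq_measure ennreal_mult)
      finally show ?thesis .
    qed
    have e2: "emeasure \<mu> (A - S) = emeasure P (A - S)"
    proof -
      have "emeasure \<mu> (A - S) = (\<integral>\<^sup>+ x. p x * indicator (A - S) x \<partial>Q)"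
        unfolding emu[OF sets.Diff[OF A S]]
        using sets.sets_into_space[OF A]
        by (intro nn_integral_cong) (auto simp: f_def indicator_def S_def PD.S_def min_def not_less)
      also have "\<dots> = emeasure P (A - S)" by (simp add: PD.emeas)
      finally show ?thesis .
    qed
    have m1: "measure \<mu> (A \<inter> S) = g * measure Q (A \<inter> S)"
      using e1 g by (simp add: mu.emeasure_eq_measure)
    have m2: "measure \<mu> (A - S) = measure P (A - S)"
      using e2 by (simp add: mu.emeasure_eq_measure P.emeasure_eq_measure)
    have "measure \<mu> A = measure \<mu> (A \<inter> S) + measure \<mu> (A - S)"
      using mu.finite_measure_Diff'[of A S] smu by simp
    moreover have "measure P A = measure P (A \<inter> S) + measure P (A - S)"
      using P.finite_measure_Diff'[of A S] sPQ by simp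
    moreover have "measure P (A \<inter> S) - g * measure Q (A \<inter> S) \<le> Egamma g P Q"
      by (rule Egamma_ge) (use g in \<open>auto simp: sPQ P.finite_measure_axioms\<close>)
    ultimately show "measure P A - 1 * measure \<mu> A \<le> \<epsilon>" using m1 m2 E by simp
  qed
  show "\<mu> \<in> Bball \<epsilon> P Q" unfolding Bball_def using smu sPQ fin ac Eb by simp
  have "AE x in Q. f x = RN_deriv Q \<mu> x"
    unfolding \<mu>_def by (rule Q.RN_deriv_unique) auto
  then have ae: "AE x in \<mu>. f x = RN_deriv Q \<mu> x"
    by (rule absolutely_continuous_AE[OF smu ac])
  have meas: "(\<lambda>x. elog b (RN_deriv Q \<mu> x)) \<in> borel_measurable \<mu>"
    unfolding \<mu>_def by simp
  have "esssup \<mu> (\<lambda>x. elog b (RN_deriv Q \<mu> x)) \<le> ereal (log b g)"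
  proof (rule esssup_I[OF meas])
    show "AE x in \<mu>. elog b (RN_deriv Q \<mu> x) \<le> ereal (log b g)"
      using ae
    proof eventually_elim
      case (elim x)
      have "RN_deriv Q \<mu> x \<le> ennreal g" using elim[symmetric] by (simp add: f_def)
      then show ?case using elog_le_iff[OF b g] by simp
    qed
  qed
  then show "renyi b \<infinity> \<mu> Q \<le> ereal (log b g)" unfolding renyi_def by simp
qed

lemma Econt:
  assumes "0 \<le> h" "h \<le> g"
  shows "Egamma h P Q - (g - h) \<le> Egamma g P Q"
proof -
  have "measure P (PD.S h) - g * measure Q (PD.S h) \<le> Egamma g P Q"
    by (rule Egamma_ge) (use assms in \<open>auto simp: sPQ P.finite_measure_axioms\<close>)
  moreover have "(g - h) * measure Q (PD.S h) \<le> (g - h) * 1"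
    using assms by (intro mult_left_mono) auto
  ultimately show ?thesis using PD.Egamma_eq[of h] assms by (simp add: algebra_simps)
qed

lemma part_dinf:
  assumes g: "\<gamma> \<ge> 1" and E: "Egamma \<gamma> P Q > \<epsilon>"
  shows "renyi_minus b \<infinity> \<epsilon> P Q \<ge> ereal (log b \<gamma>)"
  unfolding renyi_minus_def by (rule INF_greatest) (use Linf[of \<gamma>] g E in auto)

lemma part_e1:
  assumes g: "\<gamma> \<ge> 1"
  shows "renyi_minus b \<infinity> \<epsilon> P Q \<le> ereal (log b \<gamma>) \<longleftrightarrow> Egamma \<gamma> P Q \<le> \<epsilon>"
proof
  assume "Egamma \<gamma> P Q \<le> \<epsilon>"
  then obtain \<mu> where "\<mu> \<in> Bball \<epsilon> P Q" "renyi b \<infinity> \<mu> Q \<le> ereal (log b \<gamma>)"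
    using Uinf[of \<gamma>] g by auto
  then show "renyi_minus b \<infinity> \<epsilon> P Q \<le> ereal (log b \<gamma>)"
    unfolding renyi_minus_def by (rule INF_lower2)
next
  assume le: "renyi_minus b \<infinity> \<epsilon> P Q \<le> ereal (log b \<gamma>)"
  show "Egamma \<gamma> P Q \<le> \<epsilon>"
  proof (rule ccontr)
    assume "\<not> Egamma \<gamma> P Q \<le> \<epsilon>"
    then have E: "Egamma \<gamma> P Q > \<epsilon>" by simp
    define g' where "g' = \<gamma> + (Egamma \<gamma> P Q - \<epsilon>) / 2"
    have g': "g' > \<gamma>" unfolding g'_def using E by simp
    have "Egamma g' P Q \<ge> Egamma \<gamma> P Q - (g' - \<gamma>)" using Econt[of \<gamma> g'] g g' by simp
    moreover have "g' - \<gamma> = (Egamma \<gamma> P Q - \<epsilon>) / 2" unfolding g'_def by simp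
    ultimately have E': "Egamma g' P Q > \<epsilon>" using E by (simp add: field_simps)
    have "ereal (log b g') \<le> renyi_minus b \<infinity> \<epsilon> P Q"
      unfolding renyi_minus_def by (rule INF_greatest) (use Linf[of g'] g g' E' in auto)
    moreover have "log b \<gamma> < log b g'" using g g' b by simp
    ultimately show False using le by (metis ereal_less_eq(3) leD order_trans)
  qed
qed


lemma G_nonempty: "\<exists>g>0. Egamma g P Q \<le> \<epsilon>"
proof -
  have dec: "decseq (\<lambda>n. PD.S (real n))"
    unfolding decseq_def
  proof (intro allI impI subsetI)
    fix m n :: nat and x assume mn: "m \<le> n" and x: "x \<in> PD.S (real n)"
    have le: "ennreal (real m) \<le> ennreal (real n)" using mn by (intro ennreal_leI) simp
    have lt: "ennreal (real n) < p x" and sp: "x \<in> space Q" using x unfolding PD.S_def by simp_all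
    have "ennreal (real m) < p x" by (rule order.strict_trans1[OF le lt])
    with sp have "ennreal (real m) < p x" "x \<in> space Q" by simp_all
    then show "x \<in> PD.S (real m)" unfolding PD.S_def by simp
  qed
  have "(\<lambda>n. measure P (PD.S (real n))) \<longlonglongrightarrow> measure P (\<Inter>n. PD.S (real n))"
  proof (rule P.finite_Lim_measure_decseq)
    show "range (\<lambda>n. PD.S (real n)) \<subseteq> sets P" by (simp add: sPQ image_subset_iff)
  qed (rule dec)
  moreover have "(\<Inter>n. PD.S (real n)) = {x \<in> space Q. p x = \<infinity>}"
  proof (rule set_eqI)
    fix x
    show "x \<in> (\<Inter>n. PD.S (real n)) \<longleftrightarrow> x \<in> {x \<in> space Q. p x = \<infinity>}"
    proof
      assume x: "x \<in> (\<Inter>n. PD.S (real n))"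
      then have sp: "x \<in> space Q" unfolding PD.S_def by simp
      have lt: "ennreal (real n) < p x" for n using x unfolding PD.S_def by simp
      have "p x = \<infinity>"
      proof (rule ccontr)
        assume ninf: "p x \<noteq> \<infinity>"
        obtain r where r: "p x = ennreal r" "r \<ge> 0"
          using ennreal_cases[of "p x"] ninf by (metis infinity_ennreal_def)
        obtain n :: nat where n: "r < real n" using reals_Archimedean2 by blast
        have "ennreal (real n) < ennreal r" using lt[of n] r by simp
        then have "real n < r" by (simp add: ennreal_less_iff)
        then show False using n by simp
      qed
      then show "x \<in> {x \<in> space Q. p x = \<infinity>}" using sp by simp
    next
      assume "x \<in> {x \<in> space Q. p x = \<infinity>}"
      then show "x \<in> (\<Inter>n. PD.S (real n))" unfolding PD.S_def by simp
    qed
  qed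
  moreover have "measure P {x \<in> space Q. p x = \<infinity>} = 0"
  proof -
    have "emeasure Q {x \<in> space Q. p x = \<infinity>} = 0"
      using PD.m_fin by (intro emeasure_eq_0_AE) simp
    moreover have "{x \<in> space Q. p x = \<infinity>} \<in> sets Q" by measurable
    ultimately have "emeasure P {x \<in> space Q. p x = \<infinity>} = 0"
      using absolutely_continuousD[OF acP] by blast
    then show ?thesis by (simp add: measure_def)
  qed
  ultimately have "(\<lambda>n. measure P (PD.S (real n))) \<longlonglongrightarrow> 0" by simp
  then have "eventually (\<lambda>n. measure P (PD.S (real n)) < \<epsilon>) sequentially"
    using eps by (intro order_tendstoD(2)) auto
  then obtain N where N: "\<And>n. n \<ge> N \<Longrightarrow> measure P (PD.S (real n)) < \<epsilon>"
    by (auto simp: eventually_sequentially)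
  define g where "g = real (Suc N)"
  have g0: "g > 0" unfolding g_def by simp
  have nn: "g * measure Q (PD.S g) \<ge> 0" using g0 by simp
  have "measure P (PD.S g) < \<epsilon>" using N[of "Suc N", folded g_def] by simp
  then have "Egamma g P Q \<le> \<epsilon>" using PD.Egamma_eq[OF less_imp_le[OF g0]] nn by linarith
  then show ?thesis unfolding g_def by (intro exI[of _ "real (Suc N)"]) simp
qed

lemma G_lower:
  assumes g: "g > 0" "Egamma g P Q \<le> \<epsilon>" shows "g \<ge> 1 - \<epsilon>"
proof (rule ccontr)
  assume "\<not> g \<ge> 1 - \<epsilon>"
  have "measure P (space P) - g * measure Q (space P) \<le> Egamma g P Q"
    by (rule Egamma_ge[OF P.finite_measure_axioms sets.top]) (use g in simp)
  moreover have "measure P (space P) = 1" by (rule P.prob_space)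
  moreover have "measure Q (space P) = 1" unfolding spaceP by (rule Q.prob_space)
  ultimately have "1 - g \<le> Egamma g P Q" by simp
  then show False using g \<open>\<not> g \<ge> 1 - \<epsilon>\<close> by simp
qed

lemma part_e2:
  "renyi_minus b \<infinity> \<epsilon> P Q = ereal (log b (Inf {g. g > 0 \<and> Egamma g P Q \<le> \<epsilon>}))"
proof -
  define G where "G = {g. g > 0 \<and> Egamma g P Q \<le> \<epsilon>}"
  define gs where "gs = Inf G"
  have Gne: "G \<noteq> {}" using G_nonempty unfolding G_def by auto
  have bdd: "bdd_below G" unfolding G_def by (rule bdd_belowI[of _ 0]) simp
  have gs1: "gs \<ge> 1 - \<epsilon>" unfolding gs_def
  proof (rule cInf_greatest[OF Gne])
    fix g assume "g \<in> G" then show "1 - \<epsilon> \<le> g" unfolding G_def using G_lower by blast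
  qed
  then have gs0: "gs > 0" using eps by simp
  have Egs: "Egamma gs P Q \<le> \<epsilon>"
  proof (rule field_le_epsilon)
    fix e :: real assume e: "e > 0"
    have "gs < gs + e" using e by simp
    then obtain g where g: "g \<in> G" "g < gs + e"
      unfolding gs_def using cInf_lessD[OF Gne] by blast
    have "gs \<le> g" unfolding gs_def by (rule cInf_lower[OF g(1) bdd])
    then have "Egamma gs P Q - (g - gs) \<le> Egamma g P Q" using gs0 by (intro Econt) auto
    then show "Egamma gs P Q \<le> \<epsilon> + e" using g \<open>gs \<le> g\<close> unfolding G_def by simp
  qed
  have le: "renyi_minus b \<infinity> \<epsilon> P Q \<le> ereal (log b gs)"
  proof -
    obtain \<mu> where "\<mu> \<in> Bball \<epsilon> P Q" "renyi b \<infinity> \<mu> Q \<le> ereal (log b gs)"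
      using Uinf[OF gs0 Egs] by blast
    then show ?thesis unfolding renyi_minus_def by (rule INF_lower2)
  qed
  have ge: "ereal (log b gs) \<le> renyi_minus b \<infinity> \<epsilon> P Q"
  proof (rule ccontr)
    assume "\<not> ereal (log b gs) \<le> renyi_minus b \<infinity> \<epsilon> P Q"
    then have lt: "renyi_minus b \<infinity> \<epsilon> P Q < ereal (log b gs)" by (simp add: not_le)
    obtain z where z: "renyi_minus b \<infinity> \<epsilon> P Q < ereal z" "ereal z < ereal (log b gs)"
      using ereal_dense2[OF lt] by blast
    define g where "g = b powr z"
    have g0: "g > 0" unfolding g_def using b by simp
    have lg: "log b g = z" unfolding g_def using b by simp
    have "log b g < log b gs" using z(2) lg by simp
    then have "g < gs" using g0 gs0 b by simp
    have "g \<notin> G"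
    proof
      assume "g \<in> G"
      then have "gs \<le> g" unfolding gs_def using bdd by (rule cInf_lower)
      then show False using \<open>g < gs\<close> by simp
    qed
    then have E: "Egamma g P Q > \<epsilon>" using g0 unfolding G_def by simp
    have "ereal (log b g) \<le> renyi_minus b \<infinity> \<epsilon> P Q"
      unfolding renyi_minus_def by (rule INF_greatest) (rule Linf[OF g0 E])
    then have "ereal z \<le> renyi_minus b \<infinity> \<epsilon> P Q" using lg by simp
    then show False using z(1) by simp
  qed
  show ?thesis using antisym[OF le ge] unfolding gs_def G_def .
qed


lemma LB:
  assumes A: "A \<in> sets P" and PA: "measure P A \<ge> 1 - \<epsilon>"
  shows "elog b (1 / emeasure Q A) \<le> renyi_plus b 0 \<epsilon> P Q"
proof -
  have AQ[measurable]: "A \<in> sets Q" using A sPQ by simp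
  define f where "f x = p x * indicator A x" for x
  have f[measurable]: "f \<in> borel_measurable Q" unfolding f_def by measurable
  define \<mu> where "\<mu> = density Q f"
  have smu: "sets \<mu> = sets Q" and spmu: "space \<mu> = space Q" unfolding \<mu>_def by auto
  have emu: "emeasure \<mu> B = emeasure P (B \<inter> A)" if B: "B \<in> sets Q" for B
  proof -
    have "emeasure \<mu> B = (\<integral>\<^sup>+ x. f x * indicator B x \<partial>Q)"
      unfolding \<mu>_def using B by (simp add: emeasure_density)
    also have "\<dots> = (\<integral>\<^sup>+ x. p x * indicator (B \<inter> A) x \<partial>Q)"
      by (intro nn_integral_cong) (simp add: f_def split: split_indicator)
    also have "\<dots> = emeasure P (B \<inter> A)" using B by (simp add: PD.emeas)
    finally show ?thesis .
  qed
  have fin: "finite_measure \<mu>"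
  proof
    have "emeasure \<mu> (space \<mu>) \<le> emeasure P (space P)"
      unfolding spmu emu[OF sets.top] using sets.sets_into_space[OF A] by (intro emeasure_mono) auto
    then show "emeasure \<mu> (space \<mu>) \<noteq> \<infinity>" using P.emeasure_space_1 by (auto simp: top_unique)
  qed
  interpret mu: finite_measure \<mu> by (rule fin)
  have ac: "absolutely_continuous Q \<mu>" unfolding \<mu>_def by (rule absolutely_continuousI_density) simp
  have Eb: "Egamma 1 P \<mu> \<le> \<epsilon>"
  proof (rule Egamma_le)
    fix B assume "B \<in> sets P"
    then have B: "B \<in> sets Q" by (simp add: sPQ)
    have m1: "measure \<mu> B = measure P (B \<inter> A)"
      using emu[OF B] by (simp add: mu.emeasure_eq_measure P.emeasure_eq_measure)
    have "measure P B = measure P (B \<inter> A) + measure P (B - A)"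
      using P.finite_measure_Diff'[of B A] B AQ sPQ by (simp add: Int_commute)
    moreover have "measure P (B - A) \<le> measure P (space P - A)"
    proof (rule P.finite_measure_mono)
      show "B - A \<subseteq> space P - A" using sets.sets_into_space[OF B] spaceP by auto
      show "space P - A \<in> sets P" using A by auto
    qed
    moreover have "measure P (space P - A) = 1 - measure P A" using P.prob_compl[OF A] .
    ultimately show "measure P B - 1 * measure \<mu> B \<le> \<epsilon>" using m1 PA by simp
  qed
  have inB: "\<mu> \<in> Bball \<epsilon> P Q" unfolding Bball_def using smu sPQ fin ac Eb by simp
  define T where "T = {y \<in> space Q. elog b (RN_deriv Q \<mu> y) > - \<infinity>}"
  have ren: "renyi b 0 \<mu> Q = elog b (1 / emeasure Q T)" unfolding renyi_def T_def by simp
  have "AE x in Q. f x = RN_deriv Q \<mu> x"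
    unfolding \<mu>_def by (rule Q.RN_deriv_unique) auto
  then have "AE x in Q. x \<in> T \<longrightarrow> x \<in> A"
  proof eventually_elim
    case (elim x)
    show ?case
    proof
      assume "x \<in> T"
      then have "RN_deriv Q \<mu> x \<noteq> 0" unfolding T_def by (auto simp: elog_def)
      then have "f x \<noteq> 0" using elim by simp
      then show "x \<in> A" unfolding f_def by (auto simp: indicator_def)
    qed
  qed
  then have "emeasure Q T \<le> emeasure Q A" by (rule emeasure_mono_AE) simp
  then have "elog b (1 / emeasure Q A) \<le> elog b (1 / emeasure Q T)"
    by (intro elog_mono[OF b] ennreal_one_div_antimono)
  also have "\<dots> \<le> renyi_plus b 0 \<epsilon> P Q"
    unfolding renyi_plus_def ren[symmetric] by (rule SUP_upper[OF inB])
  finally show ?thesis .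
qed

lemma LB2:
  assumes A: "A \<in> sets P" and PA: "measure P A \<ge> 1 - \<epsilon>"
    and ge: "\<And>x. x \<in> A \<Longrightarrow> ennreal (b powr \<tau>) \<le> p x"
  shows "ereal (\<tau> + log b (1 / measure P A)) \<le> renyi_plus b 0 \<epsilon> P Q"
proof -
  have AQ[measurable]: "A \<in> sets Q" using A sPQ by simp
  have PA0: "measure P A > 0" using PA eps by simp
  have QA: "b powr \<tau> * measure Q A \<le> measure P A"
    by (rule PD.meas_ge[OF AQ _ ge]) auto
  have "ereal (\<tau> + log b (1 / measure P A)) \<le> elog b (1 / emeasure Q A)"
  proof (cases "measure Q A = 0")
    case True
    then have "emeasure Q A = 0" by (simp add: Q.emeasure_eq_measure)
    then show ?thesis by (simp add: elog_def)
  next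
    case False
    then have q0: "measure Q A > 0" by (simp add: less_le)
    have "elog b (1 / emeasure Q A) = ereal (log b (1 / measure Q A))"
      using q0 by (simp add: Q.emeasure_eq_measure elog_inv_real)
    moreover have "\<tau> + log b (1 / measure P A) \<le> log b (1 / measure Q A)"
    proof -
      have "log b (b powr \<tau> * measure Q A) \<le> log b (measure P A)"
        using QA q0 b PA0 by (subst log_le_cancel_iff) auto
      then have "\<tau> + log b (measure Q A) \<le> log b (measure P A)"
        using q0 b by (simp add: log_mult)
      then show ?thesis using q0 PA0 b by (simp add: log_divide)
    qed
    ultimately show ?thesis by simp
  qed
  also have "\<dots> \<le> renyi_plus b 0 \<epsilon> P Q" by (rule LB[OF A PA])
  finally show ?thesis .
qed


definition "beta = beta_NP (1 - \<epsilon>) P Q"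

lemma beta_set_ne: "{measure Q A | A. A \<in> sets P \<and> measure P A \<ge> 1 - \<epsilon>} \<noteq> {}"
proof -
  have "space P \<in> sets P \<and> measure P (space P) \<ge> 1 - \<epsilon>" using eps P.prob_space by simp
  then show ?thesis by blast
qed

lemma beta_bdd: "bdd_below {measure Q A | A. A \<in> sets P \<and> measure P A \<ge> 1 - \<epsilon>}"
  by (rule bdd_belowI[of _ 0]) auto

lemma beta_le: "A \<in> sets P \<Longrightarrow> measure P A \<ge> 1 - \<epsilon> \<Longrightarrow> beta \<le> measure Q A"
  unfolding beta_def beta_NP_def by (rule cInf_lower[OF _ beta_bdd]) blast

lemma beta_nonneg: "beta \<ge> 0"
  unfolding beta_def beta_NP_def by (rule cInf_greatest[OF beta_set_ne]) auto

lemma part_f_le: "renyi_plus b 0 \<epsilon> P Q \<le> - elog b (ennreal beta)"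
  unfolding renyi_plus_def
proof (rule SUP_least)
  fix \<mu> assume mu: "\<mu> \<in> Bball \<epsilon> P Q"
  interpret M: dsetting Q \<mu> by (rule Bball_D(1)[OF mu])
  define T where "T = {y \<in> space Q. elog b (M.m y) > - \<infinity>}"
  have T[measurable]: "T \<in> sets Q" unfolding T_def by measurable
  have ren: "renyi b 0 \<mu> Q = elog b (1 / emeasure Q T)" unfolding renyi_def T_def M.m_def by simp
  have TP: "T \<in> sets P" using T sPQ by simp
  have z: "measure \<mu> (space Q - T) \<le> 0 * measure Q (space Q - T)"
    by (rule M.meas_le) (auto simp: T_def elog_eq_minf)
  have "measure P (space Q - T) - measure \<mu> (space Q - T) \<le> \<epsilon>"
    by (rule Bball_D(2)[OF mu]) auto
  moreover have "measure P (space Q - T) = 1 - measure P T" using P.prob_compl[OF TP] spaceP by simp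
  ultimately have PT: "measure P T \<ge> 1 - \<epsilon>" using z measure_nonneg[of \<mu> "space Q - T"] by simp
  have bT: "beta \<le> measure Q T" by (rule beta_le[OF TP PT])
  show "renyi b 0 \<mu> Q \<le> - elog b (ennreal beta)"
  proof (cases "beta > 0")
    case False
    then have "beta = 0" using beta_nonneg by simp
    then show ?thesis by (simp add: elog_def)
  next
    case True
    then have qT: "measure Q T > 0" using bT by simp
    have "renyi b 0 \<mu> Q = ereal (log b (1 / measure Q T))"
      unfolding ren using qT by (simp add: Q.emeasure_eq_measure elog_inv_real)
    also have "log b (1 / measure Q T) \<le> - log b beta"
      using True qT bT b by (simp add: log_divide)
    finally show ?thesis using True by (simp add: elog_ennreal)
  qed
qed

lemma part_f_ge: "- elog b (ennreal beta) \<le> renyi_plus b 0 \<epsilon> P Q"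
proof (rule ccontr)
  assume "\<not> - elog b (ennreal beta) \<le> renyi_plus b 0 \<epsilon> P Q"
  then have lt: "renyi_plus b 0 \<epsilon> P Q < - elog b (ennreal beta)" by (simp add: not_le)
  obtain z where z: "renyi_plus b 0 \<epsilon> P Q < ereal z" "ereal z < - elog b (ennreal beta)"
    using ereal_dense2[OF lt] by blast
  have low: "b powr (- z) \<le> measure Q A" if A: "A \<in> sets P" "measure P A \<ge> 1 - \<epsilon>" for A
  proof -
    have e: "elog b (1 / emeasure Q A) < ereal z" using LB[OF A] z(1) by (rule order.strict_trans1)
    have q0: "measure Q A > 0"
    proof (rule ccontr)
      assume "\<not> measure Q A > 0"
      then have "emeasure Q A = 0" by (simp add: Q.emeasure_eq_measure less_le)
      then show False using e by (simp add: elog_def)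
    qed
    have "log b (1 / measure Q A) < z"
      using e q0 by (simp add: Q.emeasure_eq_measure elog_inv_real)
    then have "- z < log b (measure Q A)" using q0 b by (simp add: log_divide)
    then have "b powr (- z) < b powr (log b (measure Q A))" using b by simp
    then show ?thesis using q0 b by simp
  qed
  have bz: "b powr (- z) \<le> beta" unfolding beta_def beta_NP_def
    by (rule cInf_greatest[OF beta_set_ne]) (use low in blast)
  then have b0: "beta > 0" using b by (smt (verit) powr_gt_zero)
  have "- z \<le> log b beta" using bz b b0 by (metis log_powr_cancel le_log_iff powr_gt_zero)
  then have "- elog b (ennreal beta) \<le> ereal z" using b0 by (simp add: elog_ennreal)
  then show False using z(2) by simp
qed

lemma part_f: "renyi_plus b 0 \<epsilon> P Q = - elog b (ennreal (beta_NP (1 - \<epsilon>) P Q))"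
  using antisym[OF part_f_le part_f_ge] unfolding beta_def .

lemma part_g:
  assumes tau: "\<epsilon> \<ge> measure P {x \<in> space P. info_dens b P Q x \<le> ereal \<tau>}"
    and sier: "nonatomic P \<Longrightarrow> \<forall>A\<in>sets P. \<forall>r. 0 \<le> r \<and> r \<le> measure P A \<longrightarrow>
                    (\<exists>B\<in>sets P. B \<subseteq> A \<and> measure P B = r)"
  shows "renyi_plus b 0 \<epsilon> P Q \<ge> ereal \<tau>
          \<and> (nonatomic P \<longrightarrow> renyi_plus b 0 \<epsilon> P Q \<ge> ereal (\<tau> + log b (1 / (1 - \<epsilon>))))"
proof -
  define A where "A = {x \<in> space P. info_dens b P Q x > ereal \<tau>}"
  have AP: "A \<in> sets P" unfolding A_def using info_meas sPQ by measurable
  have "{x \<in> space P. info_dens b P Q x \<le> ereal \<tau>} = space P - A" unfolding A_def by auto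
  then have "measure P A \<ge> 1 - \<epsilon>" using tau P.prob_compl[OF AP] by simp
  then have PA: "measure P A \<ge> 1 - \<epsilon>" .
  have ge: "ennreal (b powr \<tau>) \<le> p x" if "x \<in> A" for x
  proof -
    have bt: "b powr \<tau> > 0" using b by simp
    have "ereal (log b (b powr \<tau>)) < elog b (p x)"
      using that b unfolding A_def info_dens_def PD.m_def by simp
    then show ?thesis using elog_gt_iff[OF b bt] by simp
  qed
  have 1: "ereal \<tau> \<le> renyi_plus b 0 \<epsilon> P Q"
  proof -
    have "measure P A \<le> 1" by simp
    moreover have "measure P A > 0" using PA eps by simp
    ultimately have "log b (1 / measure P A) \<ge> 0" using b by simp
    then have "ereal \<tau> \<le> ereal (\<tau> + log b (1 / measure P A))" by simp
    also have "\<dots> \<le> renyi_plus b 0 \<epsilon> P Q" by (rule LB2[OF AP PA ge])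
    finally show ?thesis .
  qed
  have 2: "ereal (\<tau> + log b (1 / (1 - \<epsilon>))) \<le> renyi_plus b 0 \<epsilon> P Q" if na: "nonatomic P"
  proof -
    obtain B where B: "B \<in> sets P" "B \<subseteq> A" "measure P B = 1 - \<epsilon>"
      using sier[OF na] AP PA eps by (metis less_eq_real_def diff_gt_0_iff_gt)
    have "ereal (\<tau> + log b (1 / measure P B)) \<le> renyi_plus b 0 \<epsilon> P Q"
      by (rule LB2[OF B(1)]) (use B ge in auto)
    then show ?thesis using B(3) by simp
  qed
  show ?thesis using 1 2 by simp
qed


lemma part_b1:
  "relent b P Q \<le> enn2ereal (\<integral>\<^sup>+ \<tau>\<in>{0..}. ennreal (measure P {x \<in> space P. info_dens b P Q x > ereal \<tau>}) \<partial>lborel)"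
proof -
  have mP: "measurable P N = measurable Q N" for N :: "ennreal measure" by (rule measurable_cong_sets[OF sPQ refl])
  have fm[measurable]: "(\<lambda>x. e2ennreal (max 0 (info_dens b P Q x))) \<in> borel_measurable P"
    unfolding mP by measurable
  have "Ineg \<noteq> \<top>" using Ineg_le by (auto simp: top_unique)
  then have "enn2ereal Ineg \<noteq> \<infinity>" by (metis enn2ereal_top ennreal2_cases enn2ereal_ennreal e2ennreal_enn2ereal)
  then have "relent b P Q \<le> enn2ereal Ipos"
    unfolding relent_eq by (intro ereal_minus_nonneg_le) (auto simp: enn2ereal_nonneg)
  also have "Ipos = (\<integral>\<^sup>+ \<tau>. emeasure P {x \<in> space P. ennreal \<tau> < e2ennreal (max 0 (info_dens b P Q x))} * indicator {0..} \<tau> \<partial>lborel)"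
    unfolding Ipos_def by (rule layer_cake[OF fm]) (rule P.sigma_finite_measure_axioms)
  also have "\<dots> = (\<integral>\<^sup>+ \<tau>\<in>{0..}. ennreal (measure P {x \<in> space P. info_dens b P Q x > ereal \<tau>}) \<partial>lborel)"
  proof (rule nn_integral_cong)
    fix \<tau> :: real
    show "emeasure P {x \<in> space P. ennreal \<tau> < e2ennreal (max 0 (info_dens b P Q x))} * indicator {0..} \<tau>
        = ennreal (measure P {x \<in> space P. info_dens b P Q x > ereal \<tau>}) * indicator {0..} \<tau>"
    proof (cases "\<tau> \<ge> 0")
      case True
      then have "{x \<in> space P. ennreal \<tau> < e2ennreal (max 0 (info_dens b P Q x))} = {x \<in> space P. info_dens b P Q x > ereal \<tau>}"
        using lc_aux by auto
      then show ?thesis by (simp add: P.emeasure_eq_measure)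
    qed simp
  qed
  finally show ?thesis .
qed

end


theorem mainTheorem4:
  fixes b \<epsilon> \<gamma> :: real and \<mu> P Q :: "'a measure"
  assumes b: "b > 1"
    and P: "prob_space P" and Q: "prob_space Q"
    and sPQ: "sets P = sets Q" and smu: "sets \<mu> = sets Q"
    and fmu: "finite_measure \<mu>"
    and acmu: "absolutely_continuous Q \<mu>" and acP: "absolutely_continuous Q P"
    and eps: "0 < \<epsilon>" "\<epsilon> < 1"
    and gam: "\<gamma> \<ge> 1"
  shows
    \<comment> \<open>(a)\<close>
    "(\<forall>a::real. a > 1 \<longrightarrow>
        Egamma \<gamma> P Q \<le> Fbar b \<gamma> P Q \<and> Fbar b \<gamma> P Q \<le> a / (a - 1) * Egamma (\<gamma> / a) P Q)
     \<comment> \<open>(b)\<close>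
     \<and> relent b P Q \<le> enn2ereal (\<integral>\<^sup>+ \<tau>\<in>{0..}. ennreal (measure P {x \<in> space P. info_dens b P Q x > ereal \<tau>}) \<partial>lborel)
     \<and> relent b P Q \<ge> ereal (Egamma \<gamma> P Q * log b \<gamma> - 2 * exp (-1) * log b (exp 1))
     \<comment> \<open>(c)\<close>
     \<and> (\<forall>\<alpha>::real. 0 \<le> \<alpha> \<and> \<alpha> < 1 \<longrightarrow>
          renyi b (ereal \<alpha>) \<mu> Q \<le> ereal (log b \<gamma>)
            - ereal (1 / (1 - \<alpha>)) * elog b (ennreal (measure \<mu> (space \<mu>) - Egamma \<gamma> \<mu> Q)))
     \<and> (\<forall>\<alpha>::real. 1 < \<alpha> \<longrightarrow>
          renyi b (ereal \<alpha>) \<mu> Q \<ge> ereal (log b \<gamma>)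
            + ereal (1 / (\<alpha> - 1)) * elog b (ennreal (Egamma \<gamma> \<mu> Q)))
     \<comment> \<open>(d)\<close>
     \<and> (\<forall>\<alpha>::real. 0 \<le> \<alpha> \<and> \<alpha> < 1 \<and> Egamma \<gamma> P Q < 1 - \<epsilon> \<longrightarrow>
          renyi_plus b (ereal \<alpha>) \<epsilon> P Q
            \<le> ereal (log b \<gamma> - 1 / (1 - \<alpha>) * log b (1 - \<epsilon> - Egamma \<gamma> P Q)))
     \<and> (\<forall>\<alpha>::real. 1 < \<alpha> \<and> Egamma \<gamma> P Q > \<epsilon> \<longrightarrow>
          renyi_minus b (ereal \<alpha>) \<epsilon> P Q
            \<ge> ereal (log b \<gamma> + 1 / (\<alpha> - 1) * log b (Egamma \<gamma> P Q - \<epsilon>)))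
     \<and> (Egamma \<gamma> P Q > \<epsilon> \<longrightarrow> renyi_minus b \<infinity> \<epsilon> P Q \<ge> ereal (log b \<gamma>))
     \<comment> \<open>(e)\<close>
     \<and> (renyi_minus b \<infinity> \<epsilon> P Q \<le> ereal (log b \<gamma>) \<longleftrightarrow> Egamma \<gamma> P Q \<le> \<epsilon>)
     \<and> renyi_minus b \<infinity> \<epsilon> P Q = ereal (log b (Inf {g. g > 0 \<and> Egamma g P Q \<le> \<epsilon>}))
     \<comment> \<open>(f)\<close>
     \<and> renyi_plus b 0 \<epsilon> P Q = - elog b (ennreal (beta_NP (1 - \<epsilon>) P Q))
     \<comment> \<open>(g)\<close>
     \<and> (\<forall>\<tau>::real. \<epsilon> \<ge> measure P {x \<in> space P. info_dens b P Q x \<le> ereal \<tau>} \<longrightarrow>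
          renyi_plus b 0 \<epsilon> P Q \<ge> ereal \<tau>
          \<and> (nonatomic P \<longrightarrow> renyi_plus b 0 \<epsilon> P Q \<ge> ereal (\<tau> + log b (1 / (1 - \<epsilon>)))))"
proof -
  interpret MS: msetting b \<epsilon> P Q
    by (rule msetting.intro) (use b P Q sPQ acP eps in auto)
  interpret MU: dsetting Q \<mu>
    by (rule dsetting.intro) (use Q fmu smu acmu in auto)
  interpret PF: finite_measure P using P by (simp add: prob_space_def)
  have g0: "\<gamma> > 0" using gam by simp
  have c1: "\<forall>\<alpha>::real. 0 \<le> \<alpha> \<and> \<alpha> < 1 \<longrightarrow>
          renyi b (ereal \<alpha>) \<mu> Q \<le> ereal (log b \<gamma>)
            - ereal (1 / (1 - \<alpha>)) * elog b (ennreal (measure \<mu> (space \<mu>) - Egamma \<gamma> \<mu> Q))"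
  proof (intro allI impI)
    fix \<alpha> :: real assume a: "0 \<le> \<alpha> \<and> \<alpha> < 1"
    show "renyi b (ereal \<alpha>) \<mu> Q \<le> ereal (log b \<gamma>)
            - ereal (1 / (1 - \<alpha>)) * elog b (ennreal (measure \<mu> (space \<mu>) - Egamma \<gamma> \<mu> Q))"
    proof (cases "\<alpha> = 0")
      case True then show ?thesis by (rule MU.renyi_0[OF b g0])
    next
      case False then show ?thesis using a by (intro MU.renyi_lt1[OF b g0]) auto
    qed
  qed
  have c2: "\<forall>\<alpha>::real. 1 < \<alpha> \<longrightarrow>
          renyi b (ereal \<alpha>) \<mu> Q \<ge> ereal (log b \<gamma>)
            + ereal (1 / (\<alpha> - 1)) * elog b (ennreal (Egamma \<gamma> \<mu> Q))"
    using MU.renyi_gt1[OF b g0] by blast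
  have sier: "nonatomic P \<Longrightarrow> \<forall>A\<in>sets P. \<forall>r. 0 \<le> r \<and> r \<le> measure P A \<longrightarrow>
                    (\<exists>B\<in>sets P. B \<subseteq> A \<and> measure P B = r)"
    using PF.sierpinski by blast
  show ?thesis
    using MS.part_a[OF gam] MS.part_b1 MS.part_b2[OF gam] c1 c2
      MS.part_d1[OF gam] MS.part_d2[OF gam] MS.part_dinf[OF gam] MS.part_e1[OF gam] MS.part_e2
      MS.part_f MS.part_g[OF _ sier]
    by blast
qed

end
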